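(* Let $G$ be a finite non-abelian exponent-critical group whose order is divisible by three distinct primes. Then $G$ has a non-trivial central cyclic Sylow subgroup, and all Sylow subgroups of $G$ are abelian.
   Context: A finite group $G$ is exponent-critical if $\exp(G)$ is not the least common multiple of the exponents of the proper non-abelian subgroups of $G$. *)

theory Defs
  imports "HOL-Algebra.Algebra"
begin

definition grp_exponent :: "('a, 'b) monoid_scheme \<Rightarrow> nat" where
  "grp_exponent G = Lcm (group.ord G ` carrier G)"

definition proper_nonabelian_subgroups :: "('a, 'b) monoid_scheme \<Rightarrow> 'a set set" where
  "proper_nonabelian_subgroups G =
     {H. subgroup H G \<and> H \<noteq> carrier G \<and> \<not> comm_group (G\<lparr>carrier := H\<rparr>)}"

definition exponent_critical :: "('a, 'b) monoid_scheme \<Rightarrow> bool" where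
  "exponent_critical G \<longleftrightarrow>
     grp_exponent G \<noteq>
       Lcm ((\<lambda>H. grp_exponent (G\<lparr>carrier := H\<rparr>)) ` proper_nonabelian_subgroups G)"

definition sylow_subgroup :: "('a, 'b) monoid_scheme \<Rightarrow> nat \<Rightarrow> 'a set \<Rightarrow> bool" where
  "sylow_subgroup G p P \<longleftrightarrow>
     Factorial_Ring.prime p \<and> subgroup P G \<and> card P = p ^ multiplicity p (order G)"

definition central_subset :: "('a, 'b) monoid_scheme \<Rightarrow> 'a set \<Rightarrow> bool" where
  "central_subset G P \<longleftrightarrow> (\<forall>x\<in>P. \<forall>y\<in>carrier G. x \<otimes>\<^bsub>G\<^esub> y = y \<otimes>\<^bsub>G\<^esub> x)"

end

theory Submission
  imports Defs
begin
context group begin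

lemma inv_cancel_left [simp]:
  "x \<in> carrier G \<Longrightarrow> y \<in> carrier G \<Longrightarrow> inv x \<otimes> (x \<otimes> y) = y"
  by (simp add: m_assoc[symmetric])

lemma cancel_left_inv [simp]:
  "x \<in> carrier G \<Longrightarrow> y \<in> carrier G \<Longrightarrow> x \<otimes> (inv x \<otimes> y) = y"
  by (simp add: m_assoc[symmetric])

lemma rcos_eq_iff:
  assumes "subgroup H G" "x \<in> carrier G" "y \<in> carrier G"
  shows "(H #> x = H #> y) \<longleftrightarrow> x \<otimes> inv y \<in> H"
proof
  assume "H #> x = H #> y"
  moreover have "x \<in> H #> x" using rcos_self[OF assms(2) assms(1)] .
  ultimately have "x \<in> H #> y" by simp
  then show "x \<otimes> inv y \<in> H" using subgroup.rcos_module_imp[OF assms(1) is_group assms(3)] by blast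
next
  assume "x \<otimes> inv y \<in> H"
  then have "x \<in> H #> y" using subgroup.rcos_module_rev[OF assms(1) is_group assms(3) assms(2)] by blast
  then show "H #> x = H #> y" using repr_independence[OF _ assms(3) assms(1)] by metis
qed

lemma sub_comm_group:
  assumes "subgroup H G" "\<And>a b. a \<in> H \<Longrightarrow> b \<in> H \<Longrightarrow> a \<otimes> b = b \<otimes> a"
  shows "comm_group (G\<lparr>carrier := H\<rparr>)"
proof -
  interpret K: group "G\<lparr>carrier := H\<rparr>" using assms(1) subgroup.subgroup_is_group is_group by blast
  show ?thesis by (rule K.group_comm_groupI) (use assms in auto)
qed

lemma sub_comm_groupD:
  assumes "comm_group (G\<lparr>carrier := H\<rparr>)" "a \<in> H" "b \<in> H"
  shows "a \<otimes> b = b \<otimes> a"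
proof -
  interpret K: comm_group "G\<lparr>carrier := H\<rparr>" by fact
  show ?thesis using K.m_comm[of a b] assms by simp
qed

definition cnj :: "'a \<Rightarrow> 'a set \<Rightarrow> 'a set" where
  "cnj g K = (\<lambda>k. g \<otimes> k \<otimes> inv g) ` K"

lemma cnj_subgroup:
  assumes "subgroup K G" "g \<in> carrier G"
  shows "subgroup (cnj g K) G"
proof -
  have sub: "\<And>k. k \<in> K \<Longrightarrow> k \<in> carrier G" using assms(1) subgroup.subset by blast
  show ?thesis
  proof (rule subgroupI)
    show "cnj g K \<subseteq> carrier G" unfolding cnj_def using sub assms by auto
    show "cnj g K \<noteq> {}" unfolding cnj_def using subgroup.one_closed[OF assms(1)] by auto
  next
    fix a assume "a \<in> cnj g K"
    then obtain k where k: "k \<in> K" "a = g \<otimes> k \<otimes> inv g" unfolding cnj_def by auto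
    have "inv a = g \<otimes> inv k \<otimes> inv g" using k sub assms
      by (simp add: inv_mult_group m_assoc)
    then show "inv a \<in> cnj g K" unfolding cnj_def using k assms(1) subgroup.m_inv_closed by fastforce
  next
    fix a b assume "a \<in> cnj g K" "b \<in> cnj g K"
    then obtain k l where k: "k \<in> K" "a = g \<otimes> k \<otimes> inv g" and l: "l \<in> K" "b = g \<otimes> l \<otimes> inv g"
      unfolding cnj_def by auto
    have "a \<otimes> b = g \<otimes> (k \<otimes> l) \<otimes> inv g" using k l sub assms
      by (simp add: m_assoc)
    then show "a \<otimes> b \<in> cnj g K" unfolding cnj_def using k l assms(1) subgroup.m_closed by fastforce
  qed
qed

lemma cnj_card:
  assumes "K \<subseteq> carrier G" "g \<in> carrier G"
  shows "card (cnj g K) = card K"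
proof -
  have "inj_on (\<lambda>k. g \<otimes> k \<otimes> inv g) K"
    by (rule inj_onI) (use assms conjugation_is_inj in \<open>blast\<close>)
  then show ?thesis unfolding cnj_def by (rule card_image)
qed

lemma cnj_mem: "k \<in> K \<Longrightarrow> g \<otimes> k \<otimes> inv g \<in> cnj g K"
  unfolding cnj_def by auto

lemma mem_cnj_iff:
  assumes "K \<subseteq> carrier G" "g \<in> carrier G" "x \<in> carrier G"
  shows "x \<in> cnj g K \<longleftrightarrow> inv g \<otimes> x \<otimes> g \<in> K"
proof
  assume "x \<in> cnj g K"
  then obtain k where k: "k \<in> K" "x = g \<otimes> k \<otimes> inv g" unfolding cnj_def by auto
  then have "inv g \<otimes> x \<otimes> g = k" using assms by (auto simp: m_assoc)
  then show "inv g \<otimes> x \<otimes> g \<in> K" using k by simp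
next
  assume "inv g \<otimes> x \<otimes> g \<in> K"
  moreover have "g \<otimes> (inv g \<otimes> x \<otimes> g) \<otimes> inv g = x" using assms by (simp add: m_assoc)
  ultimately show "x \<in> cnj g K" unfolding cnj_def by (metis image_eqI)
qed

lemma rcosets_closed:
  assumes "subgroup K G" "A \<in> rcosets K" "x \<in> carrier G"
  shows "A #> x \<in> rcosets K"
proof -
  obtain a where a: "a \<in> carrier G" "A = K #> a" using assms(2) unfolding RCOSETS_def by blast
  then have "A #> x = K #> (a \<otimes> x)" using assms coset_mult_assoc subgroup.subset by blast
  then show ?thesis using a assms rcosetsI subgroup.subset by (metis m_closed)
qed

lemma rcosets_sub:
  assumes "subgroup K G" "A \<in> rcosets K"
  shows "A \<subseteq> carrier G"
  using assms subgroup.rcosets_carrier is_group by blast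

lemma coset_action:
  assumes "subgroup R G" "subgroup K G"
  shows "group_action (G\<lparr>carrier := R\<rparr>) (rcosets K) (\<lambda>r. \<lambda>A\<in>rcosets K. A #> inv r)"
proof -
  let ?E = "rcosets K"
  let ?phi = "\<lambda>r. \<lambda>A\<in>rcosets K. A #> inv r"
  have Rsub: "\<And>r. r \<in> R \<Longrightarrow> r \<in> carrier G" using assms(1) subgroup.subset by blast
  have bij: "?phi r \<in> Bij ?E" if r: "r \<in> R" for r
  proof -
    have "bij_betw (?phi r) ?E ?E"
    proof (rule bij_betwI[where g = "\<lambda>A. A #> r"])
      show "?phi r \<in> ?E \<rightarrow> ?E" using rcosets_closed[OF assms(2)] Rsub r by auto
      show "(\<lambda>A. A #> r) \<in> ?E \<rightarrow> ?E" using rcosets_closed[OF assms(2)] Rsub r by auto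
      show "(\<lambda>A. A #> r) (?phi r A) = A" if "A \<in> ?E" for A
        using that Rsub r rcosets_sub[OF assms(2)] by (simp add: coset_mult_assoc)
      show "(?phi r) (A #> r) = A" if "A \<in> ?E" for A
        using that Rsub r rcosets_sub[OF assms(2)] rcosets_closed[OF assms(2)]
        by (simp add: coset_mult_assoc)
    qed
    then show ?thesis unfolding Bij_def by auto
  qed
  have grpR: "group (G\<lparr>carrier := R\<rparr>)" using assms(1) subgroup.subgroup_is_group is_group by blast
  show ?thesis
    unfolding group_action_def group_hom_def group_hom_axioms_def
  proof (intro conjI)
    show "group (G\<lparr>carrier := R\<rparr>)" by (rule grpR)
    show "group (BijGroup ?E)" by (rule group_BijGroup)
    show "?phi \<in> hom (G\<lparr>carrier := R\<rparr>) (BijGroup ?E)"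
    proof (rule homI)
      show "?phi r \<in> carrier (BijGroup ?E)" if "r \<in> carrier (G\<lparr>carrier := R\<rparr>)" for r
        using bij that by (simp add: BijGroup_def)
      fix r1 r2 assume r: "r1 \<in> carrier (G\<lparr>carrier := R\<rparr>)" "r2 \<in> carrier (G\<lparr>carrier := R\<rparr>)"
      then have r': "r1 \<in> R" "r2 \<in> R" by auto
      have "?phi (r1 \<otimes> r2) = compose ?E (?phi r1) (?phi r2)"
      proof (rule ext)
        fix A show "?phi (r1 \<otimes> r2) A = compose ?E (?phi r1) (?phi r2) A"
        proof (cases "A \<in> ?E")
          case True
          then show ?thesis using r' Rsub rcosets_sub[OF assms(2)] rcosets_closed[OF assms(2)]
            by (simp add: compose_def coset_mult_assoc inv_mult_group)
        next
          case False
          then show ?thesis by (simp add: compose_def)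
        qed
      qed
      then show "?phi (r1 \<otimes>\<^bsub>G\<lparr>carrier := R\<rparr>\<^esub> r2) = ?phi r1 \<otimes>\<^bsub>BijGroup ?E\<^esub> ?phi r2"
        using bij r' by (simp add: BijGroup_def)
    qed
  qed
qed

end

lemma p_action_fixed:
  assumes "group_action H E \<phi>" "finite E" "finite (carrier H)" "order H = p ^ a"
    "Factorial_Ring.prime (p::nat)" "\<not> p dvd card E"
  shows "\<exists>x\<in>E. \<forall>h\<in>carrier H. \<phi> h x = x"
proof (rule ccontr)
  interpret group_action H E \<phi> by fact
  assume nf: "\<not> (\<exists>x\<in>E. \<forall>h\<in>carrier H. \<phi> h x = x)"
  have orbdvd: "p dvd card orb" if orb: "orb \<in> orbits H E \<phi>" for orb
  proof -
    obtain x where x: "x \<in> E" "orb = orbit H \<phi> x" using orb unfolding orbits_def by blast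
    have "card orb * card (stabilizer H \<phi> x) = p ^ a"
      using orbit_stabilizer_theorem[OF x(1)] x assms(4) by simp
    then have "card orb dvd p ^ a" by (metis dvd_triv_left)
    then obtain i where i: "card orb = p ^ i" using divides_primepow_nat[OF assms(5)] by blast
    obtain h where h: "h \<in> carrier H" "\<phi> h x \<noteq> x" using nf x by blast
    have sub: "orb \<subseteq> E" using x element_image unfolding orbit_def by blast
    have "x \<in> orb" using orbit_refl x by simp
    moreover have "\<phi> h x \<in> orb" using x h unfolding orbit_def by blast
    ultimately have "card {x, \<phi> h x} \<le> card orb"
      using sub assms(2) by (intro card_mono) (auto intro: finite_subset)
    then have "card orb \<noteq> 1" using h by auto
    then have "i \<noteq> 0" using i by auto
    then show ?thesis using i by (simp add: dvd_power)
  qed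
  have e: "(\<Sum>orb\<in>orbits H E \<phi>. \<Sum>x\<in>orb. (1::nat)) = (\<Sum>x\<in>E. 1)"
    by (rule disjoint_sum[OF assms(2)])
  then have "card E = (\<Sum>orb\<in>orbits H E \<phi>. card orb)" by simp
  moreover have "p dvd (\<Sum>orb\<in>orbits H E \<phi>. card orb)"
    by (rule dvd_sum) (use orbdvd in auto)
  ultimately show False using assms(6) by simp
qed

context group begin

lemma finite_rcosets:
  assumes "finite (carrier G)" "subgroup K G"
  shows "finite (rcosets K)"
  using assms rcosets_subset_PowG[OF assms(2)] by (meson finite_Pow_iff finite_subset)

lemma conj_into:
  assumes fin: "finite (carrier G)" and R: "subgroup R G" "card R = p ^ a"
    and p: "Factorial_Ring.prime p" and K: "subgroup K G" and nd: "\<not> p dvd card (rcosets K)"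
  shows "\<exists>g\<in>carrier G. R \<subseteq> cnj g K"
proof -
  let ?phi = "\<lambda>r. \<lambda>A\<in>rcosets K. A #> inv r"
  have act: "group_action (G\<lparr>carrier := R\<rparr>) (rcosets K) ?phi" by (rule coset_action[OF R(1) K])
  have finR: "finite R" using fin R(1) subgroup.subset finite_subset by blast
  have o: "order (G\<lparr>carrier := R\<rparr>) = p ^ a" using R(2) by (simp add: order_def)
  have f: "finite (carrier (G\<lparr>carrier := R\<rparr>))" using finR by simp
  obtain A where A: "A \<in> rcosets K" and fx: "\<forall>r\<in>R. ?phi r A = A"
    using p_action_fixed[OF act finite_rcosets[OF fin K] f o p nd] by auto
  obtain g0 where g0: "g0 \<in> carrier G" "A = K #> g0" using A unfolding RCOSETS_def by blast
  have Rsub: "\<And>r. r \<in> R \<Longrightarrow> r \<in> carrier G" using R(1) subgroup.subset by blast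
  have "R \<subseteq> cnj (inv g0) K"
  proof
    fix r assume r: "r \<in> R"
    have "A #> inv r = A" using fx r A by auto
    then have "K #> (g0 \<otimes> inv r) = K #> g0" using g0 Rsub r K coset_mult_assoc subgroup.subset
      by (metis inv_closed)
    then have "g0 \<otimes> inv r \<otimes> inv g0 \<in> K" using rcos_eq_iff[OF K] g0 Rsub r by auto
    then have "inv (g0 \<otimes> inv r \<otimes> inv g0) \<in> K" by (rule subgroup.m_inv_closed[OF K])
    moreover have "inv (g0 \<otimes> inv r \<otimes> inv g0) = g0 \<otimes> r \<otimes> inv g0"
      using g0 Rsub r by (simp add: inv_mult_group m_assoc)
    ultimately have "g0 \<otimes> r \<otimes> inv g0 \<in> K" by simp
    then show "r \<in> cnj (inv g0) K"
      using mem_cnj_iff[of K "inv g0" r] subgroup.subset[OF K] g0 Rsub r by simp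
  qed
  then show ?thesis using g0 by blast
qed

lemma sylow_exists:
  assumes "finite (carrier G)" "Factorial_Ring.prime p"
  shows "\<exists>S. subgroup S G \<and> card S = p ^ multiplicity p (order G)"
proof -
  have "p ^ multiplicity p (order G) dvd order G" by (rule multiplicity_dvd)
  then obtain m where "order G = p ^ multiplicity p (order G) * m" by blast
  then show ?thesis using sylow_thm[OF assms(2) is_group _ assms(1)] by blast
qed

lemma order_pos: "finite (carrier G) \<Longrightarrow> order G \<noteq> 0"
  unfolding order_def by (auto simp: card_eq_0_iff)

lemma sylow_index:
  assumes "finite (carrier G)" "Factorial_Ring.prime p" "subgroup S G"
    "card S = p ^ multiplicity p (order G)"
  shows "\<not> p dvd card (rcosets S)"
proof
  assume "p dvd card (rcosets S)"
  then obtain c where c: "card (rcosets S) = p * c" by blast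
  have "card (rcosets S) * card S = order G" using lagrange[OF assms(3)] .
  then have "order G = p ^ Suc (multiplicity p (order G)) * c" using c assms(4) by (simp add: ac_simps)
  then have "p ^ Suc (multiplicity p (order G)) dvd order G" by (metis dvd_triv_left)
  moreover have "\<not> is_unit p" using assms(2) by (meson not_prime_unit)
  ultimately have "Suc (multiplicity p (order G)) \<le> multiplicity p (order G)"
    using power_dvd_iff_le_multiplicity[of "order G" p "Suc (multiplicity p (order G))"] order_pos[OF assms(1)]
    by blast
  then show False by simp
qed

lemma psub_in_sylow:
  assumes fin: "finite (carrier G)" and R: "subgroup R G" "card R = p ^ a"
    and p: "Factorial_Ring.prime p" and S: "subgroup S G" "card S = p ^ multiplicity p (order G)"
  shows "\<exists>g\<in>carrier G. R \<subseteq> cnj g S"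
  using conj_into[OF fin R p S(1) sylow_index[OF fin p S]] .

lemma sylow_conj:
  assumes fin: "finite (carrier G)" and p: "Factorial_Ring.prime p"
    and S: "subgroup S G" "card S = p ^ multiplicity p (order G)"
    and T: "subgroup T G" "card T = p ^ multiplicity p (order G)"
  shows "\<exists>g\<in>carrier G. T = cnj g S"
proof -
  obtain g where g: "g \<in> carrier G" "T \<subseteq> cnj g S" using psub_in_sylow[OF fin T p S] by blast
  have "card (cnj g S) = card T" using cnj_card[OF subgroup.subset[OF S(1)] g(1)] S T by simp
  moreover have "finite (cnj g S)" using fin cnj_subgroup[OF S(1) g(1)] subgroup.subset finite_subset by blast
  ultimately have "T = cnj g S" using g(2) card_subset_eq by metis
  then show ?thesis using g by blast
qed

end

lemma funpow_cancel:
  assumes "inj_on \<sigma> S" "\<sigma> ` S \<subseteq> S" "x \<in> S" "(\<sigma> ^^ i) x = (\<sigma> ^^ j) x" "i \<le> j"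
  shows "(\<sigma> ^^ (j - i)) x = x"
  using assms(4,5)
proof (induction i arbitrary: j)
  case 0
  then show ?case by simp
next
  case (Suc i)
  then obtain j' where j: "j = Suc j'" by (cases j) auto
  have inS: "\<And>n. (\<sigma> ^^ n) x \<in> S"
  proof -
    fix n show "(\<sigma> ^^ n) x \<in> S" by (induction n) (use assms(2,3) in auto)
  qed
  have "\<sigma> ((\<sigma> ^^ i) x) = \<sigma> ((\<sigma> ^^ j') x)" using Suc.prems j by simp
  then have "(\<sigma> ^^ i) x = (\<sigma> ^^ j') x" using assms(1) inS inj_onD by metis
  then show ?case using Suc.IH[of j'] Suc.prems j by simp
qed

context group begin

lemma sub_pow: "x [^]\<^bsub>G\<lparr>carrier := H\<rparr>\<^esub> (n::nat) = x [^] n"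
  by (simp add: nat_pow_def)

definition rep :: "'a set \<Rightarrow> 'a" where "rep A = (SOME g. g \<in> A)"

lemma rep_in:
  assumes "subgroup H G" "A \<in> rcosets H"
  shows "rep A \<in> A"
proof -
  have "A \<noteq> {}" using subgroup.rcosets_non_empty[OF assms(1) assms(2)] .
  then show ?thesis unfolding rep_def by (meson ex_in_conv someI_ex)
qed

lemma same_coset:
  assumes "subgroup H G" "B \<in> rcosets H" "x \<in> B" "y \<in> B"
  shows "x \<otimes> inv y \<in> H"
proof -
  obtain b where b: "b \<in> carrier G" "B = H #> b" using assms(2) unfolding RCOSETS_def by blast
  have yG: "y \<in> carrier G" using assms rcosets_sub by blast
  have "H #> b = H #> y" using repr_independence[of y H b] assms b by simp
  then have "x \<in> H #> y" using assms b by simp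
  then show ?thesis using subgroup.rcos_module_imp[OF assms(1) is_group yG] by blast
qed

definition tau :: "'a \<Rightarrow> 'a set \<Rightarrow> 'a" where
  "tau g A = rep A \<otimes> g \<otimes> inv (rep (A #> g))"

definition trf :: "'a set \<Rightarrow> 'a \<Rightarrow> 'a" where
  "trf H g = finprod (G\<lparr>carrier := H\<rparr>) (\<lambda>A. tau g A) (rcosets H)"

lemma tau_in:
  assumes "subgroup H G" "A \<in> rcosets H" "g \<in> carrier G"
  shows "tau g A \<in> H"
proof -
  have B: "A #> g \<in> rcosets H" using rcosets_closed assms by blast
  have "rep A \<in> A" using rep_in assms by blast
  then have "rep A \<otimes> g \<in> A #> g" unfolding r_coset_def by blast
  moreover have "rep (A #> g) \<in> A #> g" using rep_in[OF assms(1) B] .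
  ultimately show ?thesis unfolding tau_def using same_coset[OF assms(1) B] by blast
qed

lemma tau_carrier:
  assumes "subgroup H G" "A \<in> rcosets H" "g \<in> carrier G"
  shows "tau g A \<in> carrier G"
  using tau_in[OF assms] subgroup.subset[OF assms(1)] by blast

lemma rep_carrier:
  assumes "subgroup H G" "A \<in> rcosets H"
  shows "rep A \<in> carrier G"
  using rep_in[OF assms] rcosets_sub[OF assms] by blast

lemma tau_mult:
  assumes "subgroup H G" "A \<in> rcosets H" "g \<in> carrier G" "h \<in> carrier G"
  shows "tau (g \<otimes> h) A = tau g A \<otimes> tau h (A #> g)"
proof -
  have Asub: "A \<subseteq> carrier G" using rcosets_sub assms by blast
  have B: "A #> g \<in> rcosets H" using rcosets_closed assms by blast
  have C: "A #> g #> h \<in> rcosets H" using rcosets_closed assms B by blast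
  have e: "A #> (g \<otimes> h) = A #> g #> h" using coset_mult_assoc Asub assms by simp
  have r1: "rep A \<in> carrier G" using rep_carrier assms by blast
  have r2: "rep (A #> g) \<in> carrier G" using rep_carrier assms B by blast
  have r3: "rep (A #> g #> h) \<in> carrier G" using rep_carrier assms C by blast
  show ?thesis unfolding tau_def e using r1 r2 r3 assms by (simp add: m_assoc)
qed

lemma rcosets_mult_bij:
  assumes "subgroup H G" "g \<in> carrier G"
  shows "inj_on (\<lambda>A. A #> g) (rcosets H)" "(\<lambda>A. A #> g) ` (rcosets H) = rcosets H"
proof -
  have Asub: "\<And>A. A \<in> rcosets H \<Longrightarrow> A \<subseteq> carrier G" using rcosets_sub assms by blast
  show "inj_on (\<lambda>A. A #> g) (rcosets H)"
  proof (rule inj_onI)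
    fix A B assume AB: "A \<in> rcosets H" "B \<in> rcosets H" "A #> g = B #> g"
    then have "A #> g #> inv g = B #> g #> inv g" by simp
    moreover have "A \<subseteq> carrier G" "B \<subseteq> carrier G" using AB Asub by auto
    ultimately show "A = B" using assms by (simp add: coset_mult_assoc)
  qed
  show "(\<lambda>A. A #> g) ` (rcosets H) = rcosets H"
  proof
    show "(\<lambda>A. A #> g) ` (rcosets H) \<subseteq> rcosets H" using rcosets_closed assms by blast
    show "rcosets H \<subseteq> (\<lambda>A. A #> g) ` (rcosets H)"
    proof
      fix A assume A: "A \<in> rcosets H"
      then have "A #> inv g \<in> rcosets H" using rcosets_closed assms by blast
      moreover have "A = A #> inv g #> g" using A Asub assms by (simp add: coset_mult_assoc)
      ultimately show "A \<in> (\<lambda>A. A #> g) ` (rcosets H)" by blast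
    qed
  qed
qed

lemma trf_hom:
  assumes fin: "finite (carrier G)" and H: "subgroup H G"
    and comm: "\<And>a b. a \<in> H \<Longrightarrow> b \<in> H \<Longrightarrow> a \<otimes> b = b \<otimes> a"
    and g: "g \<in> carrier G" and h: "h \<in> carrier G"
  shows "trf H (g \<otimes> h) = trf H g \<otimes> trf H h"
proof -
  interpret CH: comm_group "G\<lparr>carrier := H\<rparr>" using sub_comm_group[OF H comm] by blast
  let ?X = "rcosets H"
  have f1: "(\<lambda>A. tau g A) \<in> ?X \<rightarrow> carrier (G\<lparr>carrier := H\<rparr>)" using tau_in H g by auto
  have f2: "(\<lambda>A. tau h (A #> g)) \<in> ?X \<rightarrow> carrier (G\<lparr>carrier := H\<rparr>)"
    using tau_in H g h rcosets_closed by auto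
  have f3: "(\<lambda>A. tau h A) \<in> (\<lambda>A. A #> g) ` ?X \<rightarrow> carrier (G\<lparr>carrier := H\<rparr>)"
    using tau_in H h rcosets_closed g by auto
  have "trf H (g \<otimes> h) = finprod (G\<lparr>carrier := H\<rparr>) (\<lambda>A. tau g A \<otimes>\<^bsub>G\<lparr>carrier := H\<rparr>\<^esub> tau h (A #> g)) ?X"
    unfolding trf_def
  proof (intro CH.finprod_cong')
    show "tau (g \<otimes> h) A = tau g A \<otimes>\<^bsub>G\<lparr>carrier := H\<rparr>\<^esub> tau h (A #> g)" if "A \<in> ?X" for A
      using tau_mult H g h that by simp
    show "(\<lambda>A. tau g A \<otimes>\<^bsub>G\<lparr>carrier := H\<rparr>\<^esub> tau h (A #> g)) \<in> ?X \<rightarrow> carrier (G\<lparr>carrier := H\<rparr>)"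
      using tau_in[OF H] rcosets_closed[OF H] g h by (auto intro!: subgroup.m_closed[OF H])
  qed simp
  also have "\<dots> = trf H g \<otimes> finprod (G\<lparr>carrier := H\<rparr>) (\<lambda>A. tau h (A #> g)) ?X"
    unfolding trf_def using CH.finprod_multf[OF f1 f2] by simp
  also have "finprod (G\<lparr>carrier := H\<rparr>) (\<lambda>A. tau h (A #> g)) ?X
      = finprod (G\<lparr>carrier := H\<rparr>) (\<lambda>A. tau h A) ((\<lambda>A. A #> g) ` ?X)"
    using CH.finprod_reindex[OF f3 rcosets_mult_bij(1)[OF H g]] by simp
  also have "\<dots> = trf H h" unfolding trf_def rcosets_mult_bij(2)[OF H g] ..
  finally show ?thesis .
qed

lemma trf_in:
  assumes H: "subgroup H G" and comm: "\<And>a b. a \<in> H \<Longrightarrow> b \<in> H \<Longrightarrow> a \<otimes> b = b \<otimes> a"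
    and g: "g \<in> carrier G"
  shows "trf H g \<in> H"
proof -
  interpret CH: comm_group "G\<lparr>carrier := H\<rparr>" using sub_comm_group[OF H comm] by blast
  have "(\<lambda>A. tau g A) \<in> rcosets H \<rightarrow> carrier (G\<lparr>carrier := H\<rparr>)" using tau_in H g by auto
  then show ?thesis unfolding trf_def using CH.finprod_closed by fastforce
qed

end

context group begin

lemma trf_eval:
  assumes fin: "finite (carrier G)" and H: "subgroup H G"
    and comm: "\<And>a b. a \<in> H \<Longrightarrow> b \<in> H \<Longrightarrow> a \<otimes> b = b \<otimes> a"
    and d: "d \<in> H"
    and fus: "\<And>x k. x \<in> carrier G \<Longrightarrow> x \<otimes> d [^] (k::nat) \<otimes> inv x \<in> H \<Longrightarrow> x \<otimes> d [^] k \<otimes> inv x = d [^] k"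
  shows "trf H d = d [^] card (rcosets H)"
proof -
  interpret CH: comm_group "G\<lparr>carrier := H\<rparr>" using sub_comm_group[OF H comm] by blast
  let ?X = "rcosets H"
  let ?s = "\<lambda>A. A #> d"
  let ?P = "finprod (G\<lparr>carrier := H\<rparr>)"
  have dG: "d \<in> carrier G" using d H subgroup.subset by blast
  have Hsub: "H \<subseteq> carrier G" using H subgroup.subset by blast
  have injX: "inj_on ?s ?X" and imX: "?s ` ?X = ?X" using rcosets_mult_bij[OF H dG] by auto
  have finX: "finite ?X" using finite_rcosets[OF fin H] .
  have tauH: "\<And>A. A \<in> ?X \<Longrightarrow> tau d A \<in> H" using tau_in[OF H _ dG] by blast
  have claim: "?P (tau d) S = d [^] card S" if "S \<subseteq> ?X" "?s ` S \<subseteq> S" for S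
    using that
  proof (induct "card S" arbitrary: S rule: less_induct)
    case (less S)
    show ?case
    proof (cases "S = {}")
      case True
      then show ?thesis by simp
    next
      case False
      then obtain A0 where A0: "A0 \<in> S" by blast
      have finS: "finite S" using less.prems finX finite_subset by blast
      have A0X: "A0 \<in> ?X" using A0 less.prems by blast
      have A0sub: "A0 \<subseteq> carrier G" using rcosets_sub[OF H A0X] .
      define f where "f = (\<lambda>i. (?s ^^ i) A0)"
      have fS: "f i \<in> S" for i unfolding f_def by (induction i) (use A0 less.prems in auto)
      have fX: "f i \<in> ?X" for i using fS less.prems by blast
      have fSuc: "f (Suc i) = f i #> d" for i unfolding f_def by simp
      have feq: "f i = A0 #> d [^] i" for i
      proof (induction i)
        case 0
        then show ?case unfolding f_def using A0sub by simp
      next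
        case (Suc i)
        then show ?case using fSuc A0sub dG by (simp add: coset_mult_assoc)
      qed
      have ordpos: "0 < ord d" using ord_ge_1[OF fin dG] by simp
      have fo: "f (ord d) = A0" using feq[of "ord d"] dG A0sub by simp
      define k where "k = (LEAST k. 0 < k \<and> f k = A0)"
      have kprop: "0 < k \<and> f k = A0" unfolding k_def by (rule LeastI[of _ "ord d"]) (use ordpos fo in auto)
      have kmin: "\<not> (0 < j \<and> f j = A0)" if "j < k" for j using not_less_Least[of j] that unfolding k_def by blast
      have injS: "inj_on ?s S" using injX less.prems inj_on_subset by blast
      have injf: "inj_on f {..<k}"
      proof (rule inj_onI)
        fix i j assume ij: "i \<in> {..<k}" "j \<in> {..<k}" "f i = f j"
        show "i = j"
        proof (rule ccontr)
          assume "i \<noteq> j"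
          then consider "i < j" | "j < i" by linarith
          then show False
          proof cases
            case 1
            have "f (j - i) = A0" using funpow_cancel[OF injS less.prems(2) A0, of i j] ij 1 unfolding f_def by simp
            moreover have "j - i < k" "0 < j - i" using ij 1 by auto
            ultimately show False using kmin[of "j - i"] by blast
          next
            case 2
            have "f (i - j) = A0" using funpow_cancel[OF injS less.prems(2) A0, of j i] ij 2 unfolding f_def by simp
            moreover have "i - j < k" "0 < i - j" using ij 2 by auto
            ultimately show False using kmin[of "i - j"] by blast
          qed
        qed
      qed
      define Orb where "Orb = f ` {..<k}"
      have OS: "Orb \<subseteq> S" unfolding Orb_def using fS by auto
      have cardO: "card Orb = k" unfolding Orb_def using injf card_image by fastforce
      have sO: "?s ` Orb \<subseteq> Orb"
      proof
        fix B assume "B \<in> ?s ` Orb"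
        then obtain i where i: "i < k" "B = f i #> d" unfolding Orb_def by auto
        then have B: "B = f (Suc i)" using fSuc by simp
        show "B \<in> Orb"
        proof (cases "Suc i < k")
          case True
          then show ?thesis using B unfolding Orb_def by auto
        next
          case False
          then have "Suc i = k" using i by simp
          then have "B = f 0" using B kprop unfolding f_def by simp
          then show ?thesis using kprop unfolding Orb_def by auto
        qed
      qed
      have Oimg: "B \<in> ?s ` Orb" if Bin: "B \<in> Orb" for B
      proof -
        obtain i where i: "i < k" "B = f i" using Bin Orb_def by blast
        show ?thesis
        proof (cases i)
          case 0
          then have "B = f k" using i kprop unfolding f_def by simp
          moreover have "f k = f (k - 1) #> d" using fSuc[of "k - 1"] kprop by simp
          moreover have "f (k - 1) \<in> Orb" unfolding Orb_def using kprop by auto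
          ultimately show ?thesis by blast
        next
          case (Suc j)
          then have "B = f j #> d" using i fSuc by simp
          moreover have "f j \<in> Orb" unfolding Orb_def using i Suc by auto
          ultimately show ?thesis by blast
        qed
      qed
      have sR: "?s ` (S - Orb) \<subseteq> S - Orb"
      proof
        fix B assume "B \<in> ?s ` (S - Orb)"
        then obtain A where A: "A \<in> S" "A \<notin> Orb" "B = A #> d" by auto
        have "B \<in> S" using A less.prems by blast
        moreover have "B \<notin> Orb"
        proof
          assume "B \<in> Orb"
          then obtain C where C: "C \<in> Orb" "B = C #> d" using Oimg by blast
          then have "A = C" using injS A OS inj_onD by (metis subsetD)
          then show False using A C by simp
        qed
        ultimately show "B \<in> S - Orb" by simp
      qed
      have "f 0 \<in> Orb" using kprop Orb_def by blast
      then have "S - Orb \<subset> S" using fS by blast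
      then have "card (S - Orb) < card S" by (rule psubset_card_mono[OF finS])
      then have IH: "?P (tau d) (S - Orb) = d [^] card (S - Orb)"
        using less.hyps[of "S - Orb"] sR less.prems by blast
      have tele: "?P (\<lambda>i. tau d (f i)) {..<j} = rep A0 \<otimes> d [^] j \<otimes> inv (rep (f j))" for j
      proof (induction j)
        case 0
        have "f 0 = A0" unfolding f_def by simp
        then show ?case using rep_carrier[OF H A0X] by simp
      next
        case (Suc j)
        have t1: "tau d (f j) \<in> H" using tauH fX by blast
        have t2: "?P (\<lambda>i. tau d (f i)) {..<j} \<in> H"
          using CH.finprod_closed[of "\<lambda>i. tau d (f i)" "{..<j}"] tauH fX by auto
        have "?P (\<lambda>i. tau d (f i)) {..<Suc j} = tau d (f j) \<otimes> ?P (\<lambda>i. tau d (f i)) {..<j}"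
          unfolding lessThan_Suc using CH.finprod_insert[of "{..<j}" j "\<lambda>i. tau d (f i)"] tauH fX by auto
        also have "\<dots> = ?P (\<lambda>i. tau d (f i)) {..<j} \<otimes> tau d (f j)" using comm t1 t2 by blast
        also have "\<dots> = rep A0 \<otimes> d [^] j \<otimes> inv (rep (f j)) \<otimes> tau d (f j)"
          using Suc.IH by simp
        also have "\<dots> = rep A0 \<otimes> d [^] j \<otimes> inv (rep (f j)) \<otimes> (rep (f j) \<otimes> d \<otimes> inv (rep (f (Suc j))))"
          unfolding tau_def fSuc ..
        also have "\<dots> = rep A0 \<otimes> d [^] Suc j \<otimes> inv (rep (f (Suc j)))"
          using rep_carrier[OF H A0X] rep_carrier[OF H fX] dG by (simp add: m_assoc nat_pow_Suc2)
        finally show ?case .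
      qed
      have PO: "?P (tau d) Orb = d [^] k"
      proof -
        have "?P (tau d) Orb = ?P (\<lambda>i. tau d (f i)) {..<k}"
          unfolding Orb_def using CH.finprod_reindex[of "tau d" f "{..<k}"] injf tauH fX by auto
        also have "\<dots> = rep A0 \<otimes> d [^] k \<otimes> inv (rep A0)" using tele[of k] kprop by simp
        finally have e: "?P (tau d) Orb = rep A0 \<otimes> d [^] k \<otimes> inv (rep A0)" .
        have "?P (tau d) Orb \<in> H" using CH.finprod_closed[of "tau d" Orb] tauH OS less.prems by auto
        then have "rep A0 \<otimes> d [^] k \<otimes> inv (rep A0) \<in> H" using e by simp
        then have "rep A0 \<otimes> d [^] k \<otimes> inv (rep A0) = d [^] k" using fus rep_carrier[OF H A0X] by blast
        then show ?thesis using e by simp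
      qed
      have SU: "S = Orb \<union> (S - Orb)" using OS by blast
      have finO: "finite Orb" using OS finS finite_subset by blast
      have pi1: "tau d \<in> Orb \<rightarrow> carrier (G\<lparr>carrier := H\<rparr>)" using tauH OS less.prems by auto
      have pi2: "tau d \<in> (S - Orb) \<rightarrow> carrier (G\<lparr>carrier := H\<rparr>)" using tauH less.prems by auto
      have "?P (tau d) (Orb \<union> (S - Orb)) = ?P (tau d) Orb \<otimes>\<^bsub>G\<lparr>carrier := H\<rparr>\<^esub> ?P (tau d) (S - Orb)"
        by (rule CH.finprod_Un_disjoint[OF finO _ _ pi1 pi2]) (use finS in auto)
      then have "?P (tau d) S = ?P (tau d) Orb \<otimes> ?P (tau d) (S - Orb)" using SU by simp
      also have "\<dots> = d [^] k \<otimes> d [^] card (S - Orb)" using PO IH by simp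
      also have "\<dots> = d [^] card S"
      proof -
        have "card S = card Orb + card (S - Orb)" using card_Un_disjoint[OF finO _, of "S - Orb"] SU finS by auto
        then show ?thesis using cardO dG by (simp add: nat_pow_mult)
      qed
      finally show ?thesis .
    qed
  qed
  show ?thesis unfolding trf_def using claim[of ?X] imX by simp
qed

end

context group begin

lemma sub_nat_pow_closed:
  assumes "subgroup P G" "x \<in> P"
  shows "x [^] (n::nat) \<in> P"
proof (induction n)
  case 0
  then show ?case using subgroup.one_closed[OF assms(1)] by simp
next
  case (Suc n)
  then show ?case using subgroup.m_closed[OF assms(1)] assms(2) by (simp add: nat_pow_Suc)
qed

lemma sub_pow_order:
  assumes "subgroup P G" "finite P" "c \<in> P"
  shows "c [^] card P = \<one>"
proof -
  interpret CP: group "G\<lparr>carrier := P\<rparr>" using assms(1) subgroup.subgroup_is_group is_group by blast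
  have "c [^]\<^bsub>G\<lparr>carrier := P\<rparr>\<^esub> order (G\<lparr>carrier := P\<rparr>) = \<one>\<^bsub>G\<lparr>carrier := P\<rparr>\<^esub>"
    using CP.pow_order_eq_1 assms by simp
  then show ?thesis by (simp add: sub_pow order_def)
qed

lemma normal_p_complement:
  assumes fin: "finite (carrier G)" and p: "Factorial_Ring.prime p"
    and P: "subgroup P G" "card P = p ^ multiplicity p (order G)"
    and comm: "\<And>a b. a \<in> P \<Longrightarrow> b \<in> P \<Longrightarrow> a \<otimes> b = b \<otimes> a"
    and fus: "\<And>x e. x \<in> carrier G \<Longrightarrow> e \<in> P \<Longrightarrow> x \<otimes> e \<otimes> inv x \<in> P \<Longrightarrow> x \<otimes> e \<otimes> inv x = e"
  shows "\<exists>M. M \<lhd> G \<and> (\<forall>g\<in>carrier G. \<exists>m\<in>M. \<exists>d\<in>P. g = m \<otimes> d) \<and> M \<inter> P = {\<one>}"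
proof -
  let ?V = "trf P"
  let ?n = "card (rcosets P)"
  have Psub: "P \<subseteq> carrier G" using P subgroup.subset by blast
  have finP: "finite P" using fin Psub finite_subset by blast
  have hom: "group_hom G G ?V"
  proof -
    have "?V \<in> hom G G"
      by (rule homI) (use trf_in[OF P(1) comm] Psub trf_hom[OF fin P(1) comm] in auto)
    then show ?thesis unfolding group_hom_def group_hom_axioms_def using is_group by simp
  qed
  have Vd: "?V d = d [^] ?n" if "d \<in> P" for d
  proof (rule trf_eval[OF fin P(1) comm that])
    fix x k assume "x \<in> carrier G" "x \<otimes> d [^] (k::nat) \<otimes> inv x \<in> P"
    moreover have "d [^] k \<in> P" using that sub_nat_pow_closed[OF P(1)] by blast
    ultimately show "x \<otimes> d [^] k \<otimes> inv x = d [^] k" using fus by blast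
  qed
  have nd: "\<not> p dvd ?n" using sylow_index[OF fin p P] .
  have cop: "gcd ?n (card P) = 1"
  proof -
    have "coprime p ?n" using p nd by (simp add: prime_imp_coprime)
    then have "coprime ?n (card P)" using P(2) by (simp add: coprime_commute)
    then show ?thesis by simp
  qed
  have n0: "?n \<noteq> 0" using nd by (metis dvd_0_right)
  obtain u v where uv: "?n * u = card P * v + 1" using bezout_nat[OF n0, of "card P"] cop by auto
  have powP: "c [^] (?n * u) = c" if "c \<in> P" for c
  proof -
    have cG: "c \<in> carrier G" using that Psub by blast
    have "c [^] (?n * u) = c [^] (card P * v) \<otimes> c" using uv cG by (simp add: nat_pow_mult)
    also have "c [^] (card P * v) = \<one>" using sub_pow_order[OF P(1) finP that] cG by (simp add: nat_pow_pow[symmetric])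
    finally show ?thesis using cG by simp
  qed
  define M where "M = kernel G G ?V"
  have Mn: "M \<lhd> G" unfolding M_def using group_hom.normal_kernel[OF hom] .
  have fac: "\<exists>m\<in>M. \<exists>d\<in>P. g = m \<otimes> d" if g: "g \<in> carrier G" for g
  proof -
    have c: "?V g \<in> P" using trf_in[OF P(1) comm g] .
    define d where "d = ?V g [^] u"
    have dP: "d \<in> P" unfolding d_def using c sub_nat_pow_closed[OF P(1)] by blast
    have dG: "d \<in> carrier G" using dP Psub by blast
    have "?V d = ?V g" using Vd[OF dP] powP[OF c] unfolding d_def using c Psub
      by (metis nat_pow_pow subsetD mult.commute)
    then have "?V (g \<otimes> inv d) = \<one>" using group_hom.hom_mult[OF hom] group_hom.hom_inv[OF hom] g dG
      by (metis inv_closed r_inv trf_in[OF P(1) comm] Psub subsetD)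
    then have "g \<otimes> inv d \<in> M" unfolding M_def kernel_def using g dG by simp
    moreover have "g = (g \<otimes> inv d) \<otimes> d" using g dG by (simp add: m_assoc)
    ultimately show ?thesis using dP by blast
  qed
  have int: "M \<inter> P = {\<one>}"
  proof
    show "{\<one>} \<subseteq> M \<inter> P" using subgroup.one_closed[OF P(1)] Mn normal_imp_subgroup subgroup.one_closed by blast
    show "M \<inter> P \<subseteq> {\<one>}"
    proof
      fix d assume d: "d \<in> M \<inter> P"
      then have "?V d = \<one>" unfolding M_def kernel_def by simp
      then have "d [^] ?n = \<one>" using Vd d by simp
      moreover have dG: "d \<in> carrier G" using d Psub by blast
      ultimately have "d [^] (?n * u) = \<one>" by (simp add: nat_pow_pow[symmetric])
      then show "d \<in> {\<one>}" using powP d by simp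
    qed
  qed
  show ?thesis using Mn fac int by blast
qed

lemma card_product:
  assumes fin: "finite (carrier G)" and M: "subgroup M G" and P: "subgroup P G"
    and fac: "\<forall>g\<in>carrier G. \<exists>m\<in>M. \<exists>d\<in>P. g = m \<otimes> d" and int: "M \<inter> P = {\<one>}"
  shows "card M * card P = order G"
proof -
  have Ms: "M \<subseteq> carrier G" and Ps: "P \<subseteq> carrier G" using M P subgroup.subset by auto
  have "bij_betw (\<lambda>(m, d). m \<otimes> d) (M \<times> P) (carrier G)"
  proof (rule bij_betw_imageI)
    show "inj_on (\<lambda>(m, d). m \<otimes> d) (M \<times> P)"
    proof (rule inj_onI, clarify)
      fix m1 d1 m2 d2 assume a: "m1 \<in> M" "d1 \<in> P" "m2 \<in> M" "d2 \<in> P" "m1 \<otimes> d1 = m2 \<otimes> d2"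
      have G: "m1 \<in> carrier G" "d1 \<in> carrier G" "m2 \<in> carrier G" "d2 \<in> carrier G" using a Ms Ps by auto
      have "inv m2 \<otimes> m1 = d2 \<otimes> inv d1"
      proof -
        have "inv m2 \<otimes> (m1 \<otimes> d1) \<otimes> inv d1 = inv m2 \<otimes> (m2 \<otimes> d2) \<otimes> inv d1" using a by simp
        then show ?thesis using G by (simp add: m_assoc)
      qed
      moreover have "inv m2 \<otimes> m1 \<in> M" using a subgroup.m_closed[OF M] subgroup.m_inv_closed[OF M] by blast
      moreover have "d2 \<otimes> inv d1 \<in> P" using a subgroup.m_closed[OF P] subgroup.m_inv_closed[OF P] by blast
      ultimately have "inv m2 \<otimes> m1 = \<one>" using int by auto
      moreover have "m1 = m2 \<otimes> (inv m2 \<otimes> m1)" using G by simp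
      ultimately have "m1 = m2" using G by simp
      moreover then have "d1 = d2" using a G by simp
      ultimately show "m1 = m2 \<and> d1 = d2" by simp
    qed
    show "(\<lambda>(m, d). m \<otimes> d) ` (M \<times> P) = carrier G" using fac Ms Ps by fastforce
  qed
  then have "card (M \<times> P) = card (carrier G)" by (rule bij_betw_same_card)
  then show ?thesis by (simp add: card_cartesian_product order_def)
qed

end

context group begin

lemma cnj_cnj:
  assumes "K \<subseteq> carrier G" "a \<in> carrier G" "b \<in> carrier G"
  shows "cnj a (cnj b K) = cnj (a \<otimes> b) K"
  unfolding cnj_def image_image using assms
  by (intro image_cong) (auto simp: inv_mult_group m_assoc dest!: subsetD)

lemma cnj_one:
  assumes "K \<subseteq> carrier G" shows "cnj \<one> K = K"
  unfolding cnj_def using assms by (auto simp: image_def dest: subsetD) (metis l_one r_one inv_one subsetD)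

lemma cnj_inv_eq:
  assumes "K \<subseteq> carrier G" "a \<in> carrier G" "cnj a K = K"
  shows "cnj (inv a) K = K"
proof -
  have "cnj (inv a) K = cnj (inv a) (cnj a K)" using assms by simp
  also have "\<dots> = cnj (inv a \<otimes> a) K" using cnj_cnj[OF assms(1) inv_closed[OF assms(2)] assms(2)] .
  also have "\<dots> = cnj \<one> K" using assms(2) by simp
  finally show ?thesis using cnj_one assms by simp
qed

lemma cnj_sub: "K \<subseteq> carrier G \<Longrightarrow> a \<in> carrier G \<Longrightarrow> cnj a K \<subseteq> carrier G"
  unfolding cnj_def by auto

lemma gen_normalizes:
  assumes T: "subgroup T G" and g: "g \<in> carrier G" and n: "cnj g T = T"
  shows "\<And>a. a \<in> generate G {g} \<Longrightarrow> cnj a T = T"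
proof -
  have Ts: "T \<subseteq> carrier G" using T subgroup.subset by blast
  fix a assume "a \<in> generate G {g}"
  then show "cnj a T = T"
  proof (induction rule: generate.induct)
    case one
    then show ?case using cnj_one Ts by simp
  next
    case (incl h)
    then show ?case using n by simp
  next
    case (inv h)
    then show ?case using cnj_inv_eq[OF Ts g n] by simp
  next
    case (eng h1 h2)
    have "h1 \<in> carrier G" "h2 \<in> carrier G"
      using eng.hyps generate_in_carrier[of "{g}"] g by auto
    then show ?case using eng.IH cnj_cnj[OF Ts] by metis
  qed
qed

lemma cnj_mem_eq:
  assumes "cnj a T = T" "d \<in> T" shows "a \<otimes> d \<otimes> inv a \<in> T"
  using cnj_mem[OF assms(2), of a] assms(1) by simp

lemma prod_subgroup:
  assumes T: "subgroup T G" and A: "subgroup A G" and nA: "\<And>a. a \<in> A \<Longrightarrow> cnj a T = T"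
  shows "subgroup (T <#> A) G"
proof -
  have Ts: "T \<subseteq> carrier G" using T subgroup.subset by blast
  have As: "A \<subseteq> carrier G" using A subgroup.subset by blast
  have mem: "x \<in> T <#> A \<longleftrightarrow> (\<exists>d\<in>T. \<exists>a\<in>A. x = d \<otimes> a)" for x
    unfolding set_mult_def by auto
  show ?thesis
  proof (rule subgroupI)
    show "T <#> A \<subseteq> carrier G"
    proof
      fix x assume "x \<in> T <#> A"
      then obtain d a where "d \<in> T" "a \<in> A" "x = d \<otimes> a" using mem by blast
      then show "x \<in> carrier G" using Ts As by (auto intro!: m_closed)
    qed
    show "T <#> A \<noteq> {}" using mem subgroup.one_closed[OF T] subgroup.one_closed[OF A] by blast
  next
    fix x assume "x \<in> T <#> A"
    then obtain d a where da: "d \<in> T" "a \<in> A" "x = d \<otimes> a" using mem by blast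
    have G: "d \<in> carrier G" "a \<in> carrier G" using da Ts As by auto
    have "inv x = (inv a \<otimes> inv d \<otimes> inv (inv a)) \<otimes> inv a" using da G
      by (simp add: inv_mult_group m_assoc)
    moreover have "inv a \<otimes> inv d \<otimes> inv (inv a) \<in> T"
      using cnj_mem_eq[OF nA[OF subgroup.m_inv_closed[OF A da(2)]] subgroup.m_inv_closed[OF T da(1)]] .
    moreover have "inv a \<in> A" using subgroup.m_inv_closed[OF A da(2)] .
    ultimately show "inv x \<in> T <#> A" using mem by blast
  next
    fix x y assume "x \<in> T <#> A" "y \<in> T <#> A"
    then obtain d a e b where da: "d \<in> T" "a \<in> A" "x = d \<otimes> a" and eb: "e \<in> T" "b \<in> A" "y = e \<otimes> b"
      using mem by blast
    have G: "d \<in> carrier G" "a \<in> carrier G" "e \<in> carrier G" "b \<in> carrier G" using da eb Ts As by auto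
    have "x \<otimes> y = (d \<otimes> (a \<otimes> e \<otimes> inv a)) \<otimes> (a \<otimes> b)" using da eb G by (simp add: m_assoc)
    moreover have "d \<otimes> (a \<otimes> e \<otimes> inv a) \<in> T"
      using subgroup.m_closed[OF T da(1) cnj_mem_eq[OF nA[OF da(2)] eb(1)]] .
    moreover have "a \<otimes> b \<in> A" using subgroup.m_closed[OF A da(2) eb(2)] .
    ultimately show "x \<otimes> y \<in> T <#> A" using mem by blast
  qed
qed

lemma card_set_mult_le:
  assumes "finite T" "finite A"
  shows "card (T <#> A) \<le> card T * card A"
proof -
  have "T <#> A = (\<lambda>(d, a). d \<otimes> a) ` (T \<times> A)" unfolding set_mult_def by auto
  then have "card (T <#> A) \<le> card (T \<times> A)" using card_image_le assms by (metis finite_cartesian_product)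
  then show ?thesis by (simp add: card_cartesian_product)
qed

lemma set_mult_incl:
  assumes "subgroup T G" "subgroup A G"
  shows "T \<subseteq> T <#> A" "A \<subseteq> T <#> A"
proof -
  have Ts: "T \<subseteq> carrier G" using assms subgroup.subset by blast
  have As: "A \<subseteq> carrier G" using assms subgroup.subset by blast
  show "T \<subseteq> T <#> A"
  proof
    fix d assume "d \<in> T"
    then have "d = d \<otimes> \<one>" using Ts by auto
    then show "d \<in> T <#> A" unfolding set_mult_def using \<open>d \<in> T\<close> subgroup.one_closed[OF assms(2)] by blast
  qed
  show "A \<subseteq> T <#> A"
  proof
    fix a assume "a \<in> A"
    then have "a = \<one> \<otimes> a" using As by auto
    then show "a \<in> T <#> A" unfolding set_mult_def using \<open>a \<in> A\<close> subgroup.one_closed[OF assms(1)] by blast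
  qed
qed

lemma transitive_index_dvd:
  assumes fin: "finite (carrier G)" and R: "subgroup R G" and K: "subgroup K G"
    and tr: "\<And>g. g \<in> carrier G \<Longrightarrow> \<exists>r\<in>R. K #> g = K #> r"
  shows "card (rcosets K) dvd card R"
proof -
  let ?phi = "\<lambda>r. \<lambda>A\<in>rcosets K. A #> inv r"
  interpret A: group_action "G\<lparr>carrier := R\<rparr>" "rcosets K" ?phi by (rule coset_action[OF R K])
  have Ks: "K \<subseteq> carrier G" using K subgroup.subset by blast
  have Rs: "R \<subseteq> carrier G" using R subgroup.subset by blast
  have KX: "K \<in> rcosets K" using rcosetsI[OF Ks one_closed] Ks by simp
  have "orbit (G\<lparr>carrier := R\<rparr>) ?phi K = rcosets K"
  proof
    show "orbit (G\<lparr>carrier := R\<rparr>) ?phi K \<subseteq> rcosets K"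
      unfolding orbit_def using KX rcosets_closed[OF K KX] Rs by auto
    show "rcosets K \<subseteq> orbit (G\<lparr>carrier := R\<rparr>) ?phi K"
    proof
      fix B assume "B \<in> rcosets K"
      then obtain g where g: "g \<in> carrier G" "B = K #> g" unfolding RCOSETS_def by blast
      obtain r where r: "r \<in> R" "K #> g = K #> r" using tr[OF g(1)] by blast
      have rG: "r \<in> carrier G" using r(1) Rs by blast
      have "?phi (inv r) K = K #> inv (inv r)" using KX by (rule restrict_apply')
      also have "\<dots> = K #> r" by (simp only: inv_inv[OF rG])
      finally have "B = ?phi (inv r) K" using g(2) r(2) by (simp only:)
      moreover have "inv r \<in> R" using subgroup.m_inv_closed[OF R r(1)] .
      ultimately show "B \<in> orbit (G\<lparr>carrier := R\<rparr>) ?phi K" unfolding orbit_def by auto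
    qed
  qed
  then have "card (rcosets K) * card (stabilizer (G\<lparr>carrier := R\<rparr>) ?phi K) = card R"
    using A.orbit_stabilizer_theorem[OF KX] by (simp add: order_def)
  then show ?thesis by (metis dvd_triv_left)
qed

lemma card_sub_dvd:
  assumes fin: "finite (carrier G)" and "subgroup T G" "subgroup C G" "T \<subseteq> C"
  shows "card T dvd card C"
proof -
  interpret CC: group "G\<lparr>carrier := C\<rparr>" using assms(3) subgroup.subgroup_is_group is_group by blast
  have "subgroup T (G\<lparr>carrier := C\<rparr>)" using subgroup_incl[OF assms(2,3,4)] .
  then have "card (rcosets\<^bsub>G\<lparr>carrier := C\<rparr>\<^esub> T) * card T = order (G\<lparr>carrier := C\<rparr>)"
    by (rule CC.lagrange)
  then have "card (rcosets\<^bsub>G\<lparr>carrier := C\<rparr>\<^esub> T) * card T = card C" by (simp add: order_def)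
  then show ?thesis by (metis dvd_triv_right)
qed

lemma centralizer_subgroup:
  assumes "y \<in> carrier G"
  shows "subgroup {x \<in> carrier G. x \<otimes> y = y \<otimes> x} G"
proof (rule subgroupI)
  show "{x \<in> carrier G. x \<otimes> y = y \<otimes> x} \<subseteq> carrier G" by auto
  show "{x \<in> carrier G. x \<otimes> y = y \<otimes> x} \<noteq> {}" using assms by auto
next
  fix a assume a: "a \<in> {x \<in> carrier G. x \<otimes> y = y \<otimes> x}"
  then have aG: "a \<in> carrier G" and e: "a \<otimes> y = y \<otimes> a" by auto
  have "inv a \<otimes> y = inv a \<otimes> (y \<otimes> a) \<otimes> inv a" using aG assms by (simp add: m_assoc)
  also have "\<dots> = inv a \<otimes> (a \<otimes> y) \<otimes> inv a" using e by simp
  also have "\<dots> = y \<otimes> inv a" using aG assms by (simp add: m_assoc)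
  finally show "inv a \<in> {x \<in> carrier G. x \<otimes> y = y \<otimes> x}" using aG by simp
next
  fix a b assume "a \<in> {x \<in> carrier G. x \<otimes> y = y \<otimes> x}" "b \<in> {x \<in> carrier G. x \<otimes> y = y \<otimes> x}"
  then have G: "a \<in> carrier G" "b \<in> carrier G" and e: "a \<otimes> y = y \<otimes> a" "b \<otimes> y = y \<otimes> b" by auto
  have "a \<otimes> b \<otimes> y = a \<otimes> (b \<otimes> y)" using G assms by (simp add: m_assoc)
  also have "\<dots> = a \<otimes> (y \<otimes> b)" using e by simp
  also have "\<dots> = (a \<otimes> y) \<otimes> b" using G assms by (simp add: m_assoc)
  also have "\<dots> = (y \<otimes> a) \<otimes> b" using e by simp
  also have "\<dots> = y \<otimes> (a \<otimes> b)" using G assms by (simp add: m_assoc)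
  finally show "a \<otimes> b \<in> {x \<in> carrier G. x \<otimes> y = y \<otimes> x}" using G by simp
qed

lemma normalizer_subgroup:
  assumes T: "subgroup T G"
  shows "subgroup {g \<in> carrier G. cnj g T = T} G"
proof -
  have Ts: "T \<subseteq> carrier G" using T subgroup.subset by blast
  show ?thesis
  proof (rule subgroupI)
    show "{g \<in> carrier G. cnj g T = T} \<subseteq> carrier G" by auto
    show "{g \<in> carrier G. cnj g T = T} \<noteq> {}" using cnj_one[OF Ts] by auto
  next
    fix a assume "a \<in> {g \<in> carrier G. cnj g T = T}"
    then show "inv a \<in> {g \<in> carrier G. cnj g T = T}" using cnj_inv_eq[OF Ts] by auto
  next
    fix a b assume "a \<in> {g \<in> carrier G. cnj g T = T}" "b \<in> {g \<in> carrier G. cnj g T = T}"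
    then have ab: "a \<in> carrier G" "b \<in> carrier G" "cnj a T = T" "cnj b T = T" by auto
    have "cnj (a \<otimes> b) T = cnj a (cnj b T)" using cnj_cnj[OF Ts ab(1,2)] by simp
    then show "a \<otimes> b \<in> {g \<in> carrier G. cnj g T = T}" using ab by simp
  qed
qed

end

lemma split_nonpp:
  fixes n :: nat
  assumes "n > 1" "\<not> (\<exists>t k. Factorial_Ring.prime t \<and> n = t ^ k)"
  shows "\<exists>a b. n = a * b \<and> coprime a b \<and> 1 < a \<and> 1 < b"
proof -
  obtain t where t: "Factorial_Ring.prime t" "t dvd n" using prime_factor_nat[of n] assms(1) by auto
  define m where "m = multiplicity t n"
  define b where "b = n div t ^ m"
  have nab: "n = t ^ m * b" unfolding b_def m_def using multiplicity_dvd[of t n] by simp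
  have ndb: "\<not> t dvd b" unfolding b_def m_def
    by (rule multiplicity_decompose) (use assms(1) t(1) not_prime_unit in auto)
  have cop: "coprime (t ^ m) b" using prime_imp_coprime[OF t(1) ndb] by (simp add: coprime_power_left_iff)
  have "0 < m" unfolding m_def using t assms(1) prime_multiplicity_gt_zero_iff[of t n] by auto
  then have a1: "1 < t ^ m" using one_less_power[OF prime_gt_1_nat[OF t(1)]] by blast
  have "b \<noteq> 0" using nab assms(1) by (metis mult_0_right not_one_less_zero)
  moreover have "b \<noteq> 1"
  proof
    assume "b = 1"
    then have "n = t ^ m" using nab by simp
    then show False using assms(2) t(1) by blast
  qed
  ultimately have "1 < b" by auto
  then show ?thesis using nab cop a1 by blast
qed

lemma three_bound:
  fixes n t p s :: nat
  assumes "n \<noteq> 0" "Factorial_Ring.prime t" "Factorial_Ring.prime p" "Factorial_Ring.prime s"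
    "s dvd n" "s \<noteq> t" "s \<noteq> p" "t \<noteq> p"
  shows "t ^ multiplicity t n * p ^ multiplicity p n < n"
proof -
  have d1: "t ^ multiplicity t n dvd n" by (rule multiplicity_dvd)
  have d2: "p ^ multiplicity p n dvd n" by (rule multiplicity_dvd)
  have "coprime t p" using assms(2,3,8) by (simp add: primes_coprime)
  then have "coprime (t ^ multiplicity t n) (p ^ multiplicity p n)"
    by (simp add: coprime_power_left_iff coprime_power_right_iff)
  then have d: "t ^ multiplicity t n * p ^ multiplicity p n dvd n" using divides_mult d1 d2 by blast
  have "\<not> s dvd t ^ multiplicity t n * p ^ multiplicity p n"
  proof
    assume "s dvd t ^ multiplicity t n * p ^ multiplicity p n"
    then have "s dvd t ^ multiplicity t n \<or> s dvd p ^ multiplicity p n" using prime_dvd_mult_iff assms(4) by blast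
    then have "s dvd t \<or> s dvd p" using prime_dvd_power assms(4) by blast
    then show False using primes_dvd_imp_eq assms by blast
  qed
  then have "t ^ multiplicity t n * p ^ multiplicity p n \<noteq> n" using assms(5) by auto
  moreover have "t ^ multiplicity t n * p ^ multiplicity p n \<le> n" using d assms(1) by (simp add: dvd_imp_le)
  ultimately show ?thesis by simp
qed

lemma one_bound:
  fixes n p s :: nat
  assumes "n \<noteq> 0" "Factorial_Ring.prime p" "Factorial_Ring.prime s" "s dvd n" "s \<noteq> p"
  shows "p ^ multiplicity p n < n"
proof -
  have d: "p ^ multiplicity p n dvd n" by (rule multiplicity_dvd)
  have "\<not> s dvd p ^ multiplicity p n"
  proof
    assume "s dvd p ^ multiplicity p n"
    then have "s dvd p" using prime_dvd_power assms(3) by blast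
    then show False using primes_dvd_imp_eq assms by blast
  qed
  then have "p ^ multiplicity p n \<noteq> n" using assms(4) by auto
  moreover have "p ^ multiplicity p n \<le> n" using d assms(1) by (simp add: dvd_imp_le)
  ultimately show ?thesis by simp
qed

context group begin

lemma pp_outside:
  assumes fin: "finite (carrier G)" and C: "subgroup C G" and g0: "g0 \<in> carrier G" "g0 \<notin> C"
  shows "\<exists>m::nat. g0 [^] m \<notin> C \<and> (\<exists>t k. Factorial_Ring.prime t \<and> ord (g0 [^] m) = t ^ k)"
proof -
  have "g0 [^] (1::nat) \<notin> C" using g0 by simp
  then obtain m :: nat where m: "g0 [^] m \<notin> C" and mmin: "\<forall>m'::nat. g0 [^] m' \<notin> C \<longrightarrow> ord (g0 [^] m) \<le> ord (g0 [^] m')"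
    using ex_has_least_nat[of "\<lambda>m. g0 [^] (m::nat) \<notin> C" 1 "\<lambda>m. ord (g0 [^] (m::nat))"] by blast
  define g where "g = g0 [^] m"
  have gG: "g \<in> carrier G" unfolding g_def using g0 by simp
  have gC: "g \<notin> C" unfolding g_def using m .
  define n where "n = ord g"
  have n1: "1 \<le> n" unfolding n_def using ord_ge_1[OF fin gG] .
  have "n \<noteq> 1" using gC subgroup.one_closed[OF C] ord_eq_1[OF gG] unfolding n_def by auto
  then have n1': "1 < n" using n1 by simp
  show ?thesis
  proof (rule ccontr)
    assume nopp: "\<not> ?thesis"
    then have "\<not> (\<exists>t k. Factorial_Ring.prime t \<and> n = t ^ k)" using m unfolding n_def g_def by metis
    then obtain a b where ab: "n = a * b" "coprime a b" "1 < a" "1 < b" using split_nonpp[OF n1'] by blast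
    have ga: "g [^] a \<in> C"
    proof (rule ccontr)
      assume "g [^] a \<notin> C"
      then have "g0 [^] (m * a) \<notin> C" unfolding g_def using g0 by (simp add: nat_pow_pow)
      then have "n \<le> ord (g0 [^] (m * a))" using mmin unfolding n_def g_def by blast
      moreover have "ord (g0 [^] (m * a)) = b"
      proof -
        have "ord (g [^] a) = n div a" using ord_pow[OF gG, of a] ab unfolding n_def by simp
        then show ?thesis unfolding g_def using g0 ab by (simp add: nat_pow_pow)
      qed
      ultimately show False using ab by simp
    qed
    have gb: "g [^] b \<in> C"
    proof (rule ccontr)
      assume "g [^] b \<notin> C"
      then have "g0 [^] (m * b) \<notin> C" unfolding g_def using g0 by (simp add: nat_pow_pow)
      then have "n \<le> ord (g0 [^] (m * b))" using mmin unfolding n_def g_def by blast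
      moreover have "ord (g0 [^] (m * b)) = a"
      proof -
        have "ord (g [^] b) = n div b" using ord_pow[OF gG, of b] ab unfolding n_def by simp
        then show ?thesis unfolding g_def using g0 ab by (simp add: nat_pow_pow)
      qed
      ultimately show False using ab by simp
    qed
    obtain u v :: int where uv: "u * int a + v * int b = gcd (int a) (int b)" using bezout_int by blast
    have "coprime (int a) (int b)" using ab(2) by (simp add: coprime_int_iff)
    then have "gcd (int a) (int b) = 1" by (rule coprime_imp_gcd_eq_1)
    then have uv1: "int a * u + int b * v = 1" using uv by (simp add: ac_simps)
    have "g = g [^] (int a * u + int b * v)" using uv1 gG by simp
    also have "\<dots> = (g [^] int a) [^] u \<otimes> (g [^] int b) [^] v" using gG by (simp add: int_pow_mult int_pow_pow)
    also have "\<dots> = (g [^] a) [^] u \<otimes> (g [^] b) [^] v" by (simp add: int_pow_int)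
    finally have "g \<in> C" using subgroup_int_pow_closed[OF C ga] subgroup_int_pow_closed[OF C gb] subgroup.m_closed[OF C]
      by metis
    then show False using gC by simp
  qed
qed

lemma sylow_unique_abelian:
  assumes fin: "finite (carrier G)" and p: "Factorial_Ring.prime p"
    and C: "subgroup C G" and comm: "\<And>a b. a \<in> C \<Longrightarrow> b \<in> C \<Longrightarrow> a \<otimes> b = b \<otimes> a"
    and P: "subgroup P G" "P \<subseteq> C" "card P = p ^ multiplicity p (order G)"
    and P': "subgroup P' G" "P' \<subseteq> C" "card P' = p ^ multiplicity p (order G)"
  shows "P' = P"
proof -
  interpret CC: group "G\<lparr>carrier := C\<rparr>" using C subgroup.subgroup_is_group is_group by blast
  have Cs: "C \<subseteq> carrier G" using C subgroup.subset by blast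
  have finC: "finite (carrier (G\<lparr>carrier := C\<rparr>))" using fin Cs finite_subset by auto
  have oC: "order (G\<lparr>carrier := C\<rparr>) = card C" by (simp add: order_def)
  have CdG: "card C dvd order G" using lagrange[OF C] by (metis dvd_triv_right)
  have C0: "card C \<noteq> 0" using finC subgroup.one_closed[OF C] by auto
  have G0: "order G \<noteq> 0" using order_pos[OF fin] .
  have nu: "\<not> is_unit p" using p by (meson not_prime_unit)
  have PdC: "card P dvd card C" using card_sub_dvd[OF fin P(1) C P(2)] .
  have le1: "multiplicity p (order G) \<le> multiplicity p (card C)"
    using PdC P(3) power_dvd_iff_le_multiplicity[OF C0 nu] by simp
  have le2: "multiplicity p (card C) \<le> multiplicity p (order G)"
    using dvd_imp_multiplicity_le[OF CdG G0] .
  have eq: "multiplicity p (order (G\<lparr>carrier := C\<rparr>)) = multiplicity p (order G)" using le1 le2 oC by simp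
  have PC: "subgroup P (G\<lparr>carrier := C\<rparr>)" using subgroup_incl[OF P(1) C P(2)] .
  have P'C: "subgroup P' (G\<lparr>carrier := C\<rparr>)" using subgroup_incl[OF P'(1) C P'(2)] .
  obtain c where c: "c \<in> C" "P' \<subseteq> CC.cnj c P"
    using CC.psub_in_sylow[OF finC P'C P'(3) p PC] P(3) eq by auto
  have "CC.cnj c P = P"
  proof -
    have "CC.cnj c P = (\<lambda>k. c \<otimes> k \<otimes> inv c) ` P"
      unfolding CC.cnj_def using m_inv_consistent[OF C c(1)] by simp
    also have "\<dots> = P"
    proof (rule image_cong[THEN trans, OF refl, of _ _ "\<lambda>k. k"])
      show "c \<otimes> k \<otimes> inv c = k" if "k \<in> P" for k
      proof -
        have "k \<in> C" using that P(2) by blast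
        then have "c \<otimes> k = k \<otimes> c" using comm c(1) by blast
        then show ?thesis using \<open>k \<in> C\<close> c(1) Cs by (simp add: m_assoc subsetD)
      qed
    qed simp
    finally show ?thesis .
  qed
  then have "P' \<subseteq> P" using c by simp
  moreover have "finite P" using fin P(1) subgroup.subset finite_subset by blast
  ultimately show ?thesis using card_subset_eq P(3) P'(3) by metis
qed

end

context group begin

lemma gen_nat_pow_in:
  assumes "g \<in> carrier G" shows "g [^] (m::nat) \<in> generate G {g}"
  using sub_nat_pow_closed[OF generate_is_subgroup[of "{g}"] generate.incl[of g "{g}" G]] assms by auto

lemma pow_le_mult:
  fixes t :: nat
  assumes "Factorial_Ring.prime t" "t ^ k dvd n" "n \<noteq> 0"
  shows "t ^ k \<le> t ^ multiplicity t n"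
proof -
  have "\<not> is_unit t" using assms(1) by (meson not_prime_unit)
  then have "k \<le> multiplicity t n" using assms power_dvd_iff_le_multiplicity by blast
  then show ?thesis using assms(1) prime_gt_1_nat by (simp add: power_increasing)
qed

lemma caseI:
  assumes fin: "finite (carrier G)" and p: "Factorial_Ring.prime p" and yG: "y \<in> carrier G"
    and Cdef: "C = {x \<in> carrier G. x \<otimes> y = y \<otimes> x}"
    and abel: "\<And>K. subgroup K G \<Longrightarrow> K \<noteq> carrier G \<Longrightarrow> y \<in> K \<Longrightarrow> K \<subseteq> C"
    and three: "\<And>t. Factorial_Ring.prime t \<Longrightarrow> \<exists>s. Factorial_Ring.prime s \<and> s dvd order G \<and> s \<noteq> t \<and> s \<noteq> p"
    and P: "subgroup P G" "card P = p ^ multiplicity p (order G)" "y \<in> P" "P \<subseteq> C"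
    and commC: "\<And>u v. u \<in> C \<Longrightarrow> v \<in> C \<Longrightarrow> u \<otimes> v = v \<otimes> u"
    and g0: "g0 \<in> carrier G" "g0 \<notin> C" "cnj g0 C = C"
  shows False
proof -
  have Cs: "subgroup C G" unfolding Cdef using centralizer_subgroup[OF yG] .
  have Ps: "P \<subseteq> carrier G" using P(1) subgroup.subset by blast
  have G0: "order G \<noteq> 0" using order_pos[OF fin] .
  obtain m t k where m: "g0 [^] (m::nat) \<notin> C" "Factorial_Ring.prime t" "ord (g0 [^] m) = t ^ k"
    using pp_outside[OF fin Cs g0(1,2)] by blast
  define g1 where "g1 = g0 [^] m"
  have g1G: "g1 \<in> carrier G" unfolding g1_def using g0 by simp
  have g1C: "g1 \<notin> C" unfolding g1_def using m by simp
  have nC: "cnj g1 C = C" using gen_normalizes[OF Cs g0(1) g0(3) gen_nat_pow_in[OF g0(1)]] unfolding g1_def .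
  have "cnj g1 P \<subseteq> cnj g1 C" unfolding cnj_def using P(4) by auto
  then have sub: "cnj g1 P \<subseteq> C" using nC by simp
  have nP: "cnj g1 P = P"
    using sylow_unique_abelian[OF fin p Cs commC P(1) P(4) P(2) cnj_subgroup[OF P(1) g1G] sub]
      cnj_card[OF Ps g1G] P(2) by simp
  define A where "A = generate G {g1}"
  have As: "subgroup A G" unfolding A_def using generate_is_subgroup g1G by simp
  have cardA: "card A = t ^ k" unfolding A_def using generate_pow_card[OF g1G] m(3) g1_def by simp
  have g1A: "g1 \<in> A" unfolding A_def by (rule generate.incl) simp
  have nA: "\<And>a. a \<in> A \<Longrightarrow> cnj a P = P" unfolding A_def using gen_normalizes[OF P(1) g1G nP] by blast
  define K where "K = P <#> A"
  have Ks: "subgroup K G" unfolding K_def using prod_subgroup[OF P(1) As nA] .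
  have yK: "y \<in> K" unfolding K_def using set_mult_incl[OF P(1) As] P(3) by blast
  have g1K: "g1 \<in> K" unfolding K_def using set_mult_incl[OF P(1) As] g1A by blast
  have KG: "K = carrier G"
  proof (rule ccontr)
    assume "K \<noteq> carrier G"
    then have "K \<subseteq> C" using abel Ks yK by blast
    then show False using g1K g1C by blast
  qed
  obtain s where s: "Factorial_Ring.prime s" "s dvd order G" "s \<noteq> p" using three[OF p] by blast
  have Plt: "card P < order G" using one_bound[OF G0 p s(1) s(2) s(3)] P(2) by simp
  have finP: "finite P" using fin Ps finite_subset by blast
  have finA: "finite A" using fin As subgroup.subset finite_subset by blast
  show False
  proof (cases "t = p")
    case True
    have tr: "\<exists>r\<in>A. P #> g = P #> r" if g: "g \<in> carrier G" for g
    proof -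
      have "g \<in> P <#> A" using g KG K_def by simp
      then obtain d r where dr: "d \<in> P" "r \<in> A" "g = d \<otimes> r" unfolding set_mult_def by blast
      have "P #> g = (P #> d) #> r" using dr Ps As subgroup.subset coset_mult_assoc by (metis subsetD)
      also have "P #> d = P" using subgroup.rcos_const[OF P(1) is_group dr(1)] .
      finally show ?thesis using dr by blast
    qed
    have "card (rcosets P) dvd card A" using transitive_index_dvd[OF fin As P(1) tr] by blast
    then have "card (rcosets P) dvd p ^ k" using cardA True by simp
    then obtain i where i: "card (rcosets P) = p ^ i" using divides_primepow_nat[OF p] by blast
    have "\<not> p dvd card (rcosets P)" using sylow_index[OF fin p P(1) P(2)] .
    then have "i = 0" using i by (cases i) auto
    then have "card (rcosets P) = 1" using i by simp
    then have "card P = order G" using lagrange[OF P(1)] by simp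
    then show False using Plt by simp
  next
    case False
    obtain s' where s': "Factorial_Ring.prime s'" "s' dvd order G" "s' \<noteq> t" "s' \<noteq> p" using three[OF m(2)] by blast
    have "t ^ k dvd order G" using ord_dvd_group_order[OF g1G] m(3) g1_def by simp
    then have tk: "t ^ k \<le> t ^ multiplicity t (order G)" using pow_le_mult[OF m(2) _ G0] by blast
    have "card K \<le> card P * card A" unfolding K_def using card_set_mult_le[OF finP finA] .
    also have "\<dots> \<le> p ^ multiplicity p (order G) * t ^ multiplicity t (order G)"
      using P(2) cardA tk by simp
    also have "\<dots> < order G"
      using three_bound[OF G0 m(2) p s'(1) s'(2) s'(3) s'(4) False] by (simp add: mult.commute)
    finally have "card K < order G" .
    then show False using KG by (simp add: order_def)
  qed
qed

end

context group begin

lemma conj_comm_iff: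
  assumes "x \<in> carrier G" "z \<in> carrier G" "e \<in> carrier G"
  shows "((inv x \<otimes> z \<otimes> x) \<otimes> e = e \<otimes> (inv x \<otimes> z \<otimes> x)) \<longleftrightarrow>
         (z \<otimes> (x \<otimes> e \<otimes> inv x) = (x \<otimes> e \<otimes> inv x) \<otimes> z)"
proof -
  have l: "x \<otimes> ((inv x \<otimes> z \<otimes> x) \<otimes> e) \<otimes> inv x = z \<otimes> (x \<otimes> e \<otimes> inv x)"
    using assms by (simp add: m_assoc)
  have r: "x \<otimes> (e \<otimes> (inv x \<otimes> z \<otimes> x)) \<otimes> inv x = (x \<otimes> e \<otimes> inv x) \<otimes> z"
    using assms by (simp add: m_assoc)
  have "((inv x \<otimes> z \<otimes> x) \<otimes> e = e \<otimes> (inv x \<otimes> z \<otimes> x)) \<longleftrightarrow>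
        x \<otimes> ((inv x \<otimes> z \<otimes> x) \<otimes> e) \<otimes> inv x = x \<otimes> (e \<otimes> (inv x \<otimes> z \<otimes> x)) \<otimes> inv x"
    using conjugation_is_inj[of x] assms by auto
  then show ?thesis using l r by simp
qed

lemma fusion_caseII:
  assumes yG: "y \<in> carrier G"
    and Cdef: "C = {x \<in> carrier G. x \<otimes> y = y \<otimes> x}"
    and abel: "\<And>K. subgroup K G \<Longrightarrow> K \<noteq> carrier G \<Longrightarrow> y \<in> K \<Longrightarrow> K \<subseteq> C"
    and commC: "\<And>u v. u \<in> C \<Longrightarrow> v \<in> C \<Longrightarrow> u \<otimes> v = v \<otimes> u"
    and nn: "\<And>g. g \<in> carrier G \<Longrightarrow> cnj g C = C \<Longrightarrow> g \<in> C"
    and x: "x \<in> carrier G" and e: "e \<in> C" and e': "x \<otimes> e \<otimes> inv x \<in> C"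
  shows "x \<otimes> e \<otimes> inv x = e"
proof -
  have Cs: "subgroup C G" unfolding Cdef using centralizer_subgroup[OF yG] .
  have Css: "C \<subseteq> carrier G" using Cs subgroup.subset by blast
  have yC: "y \<in> C" unfolding Cdef using yG by simp
  have eG: "e \<in> carrier G" using e Css by blast
  define e1 where "e1 = x \<otimes> e \<otimes> inv x"
  have e1G: "e1 \<in> carrier G" unfolding e1_def using x eG by simp
  have e1C: "e1 \<in> C" unfolding e1_def using e' .
  have cent_eq: "{z \<in> carrier G. z \<otimes> c = c \<otimes> z} = C"
    if c: "c \<in> C" "\<not> (\<forall>z\<in>carrier G. z \<otimes> c = c \<otimes> z)" for c
  proof
    have cG: "c \<in> carrier G" using c Css by blast
    have sub: "subgroup {z \<in> carrier G. z \<otimes> c = c \<otimes> z} G" using centralizer_subgroup[OF cG] .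
    have ne: "{z \<in> carrier G. z \<otimes> c = c \<otimes> z} \<noteq> carrier G" using c by auto
    have "y \<in> {z \<in> carrier G. z \<otimes> c = c \<otimes> z}" using yG commC[OF yC c(1)] by simp
    then show "{z \<in> carrier G. z \<otimes> c = c \<otimes> z} \<subseteq> C" using abel[OF sub ne] by blast
    show "C \<subseteq> {z \<in> carrier G. z \<otimes> c = c \<otimes> z}" using commC c(1) Css by auto
  qed
  show ?thesis
  proof (cases "e1 \<otimes> x = x \<otimes> e1")
    case True
    have "x \<otimes> e = e1 \<otimes> x" unfolding e1_def using x eG by (simp add: m_assoc)
    also have "\<dots> = x \<otimes> e1" using True .
    finally have "e = e1" using x eG e1G by simp
    then show ?thesis unfolding e1_def by simp
  next
    case False
    have nce1: "\<not> (\<forall>z\<in>carrier G. z \<otimes> e1 = e1 \<otimes> z)" using False x by metis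
    have nce: "\<not> (\<forall>z\<in>carrier G. z \<otimes> e = e \<otimes> z)"
    proof
      assume "\<forall>z\<in>carrier G. z \<otimes> e = e \<otimes> z"
      then have "x \<otimes> e = e \<otimes> x" using x by blast
      then have "e1 = e" unfolding e1_def using x eG by (simp add: m_assoc)
      then show False using False \<open>x \<otimes> e = e \<otimes> x\<close> by simp
    qed
    have Ce: "{z \<in> carrier G. z \<otimes> e = e \<otimes> z} = C" using cent_eq[OF e nce] .
    have Ce1: "{z \<in> carrier G. z \<otimes> e1 = e1 \<otimes> z} = C" using cent_eq[OF e1C nce1] .
    have "cnj x C = C"
    proof (rule Set.set_eqI)
      fix z
      show "z \<in> cnj x C \<longleftrightarrow> z \<in> C"
      proof (cases "z \<in> carrier G")
        case True
        have "z \<in> cnj x C \<longleftrightarrow> inv x \<otimes> z \<otimes> x \<in> C" using mem_cnj_iff[OF Css x True] .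
        also have "\<dots> \<longleftrightarrow> (inv x \<otimes> z \<otimes> x) \<otimes> e = e \<otimes> (inv x \<otimes> z \<otimes> x)"
          using Ce x True by auto
        also have "\<dots> \<longleftrightarrow> z \<otimes> e1 = e1 \<otimes> z" unfolding e1_def using conj_comm_iff[OF x True eG] .
        also have "\<dots> \<longleftrightarrow> z \<in> C" using Ce1 True by auto
        finally show ?thesis .
      next
        case False
        then show ?thesis using cnj_sub[OF Css x] Css by auto
      qed
    qed
    then have "x \<in> C" using nn x by blast
    then have "x \<otimes> e = e \<otimes> x" using commC e by blast
    then show ?thesis using x eG by (simp add: m_assoc)
  qed
qed

end

context group begin

lemma tpart:
  assumes fin: "finite (carrier G)" and p: "Factorial_Ring.prime p" and yG: "y \<in> carrier G"
    and ordy: "ord y = p ^ a"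
    and Cdef: "C = {x \<in> carrier G. x \<otimes> y = y \<otimes> x}"
    and abel: "\<And>K. subgroup K G \<Longrightarrow> K \<noteq> carrier G \<Longrightarrow> y \<in> K \<Longrightarrow> K \<subseteq> C"
    and three: "\<And>t. Factorial_Ring.prime t \<Longrightarrow> \<exists>s. Factorial_Ring.prime s \<and> s dvd order G \<and> s \<noteq> t \<and> s \<noteq> p"
    and Mn: "M \<lhd> G" and cardM: "card M * p ^ multiplicity p (order G) = order G"
    and t: "Factorial_Ring.prime t" "t \<noteq> p"
  shows "t ^ multiplicity t (order G) dvd card C"
proof -
  have Cs: "subgroup C G" unfolding Cdef using centralizer_subgroup[OF yG] .
  have Ms: "subgroup M G" using Mn normal_imp_subgroup by blast
  have Mss: "M \<subseteq> carrier G" using Ms subgroup.subset by blast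
  have G0: "order G \<noteq> 0" using order_pos[OF fin] .
  interpret MM: group "G\<lparr>carrier := M\<rparr>" using Ms subgroup.subgroup_is_group is_group by blast
  have finMM: "finite (carrier (G\<lparr>carrier := M\<rparr>))" using fin Mss finite_subset by auto
  have oM: "order (G\<lparr>carrier := M\<rparr>) = card M" by (simp add: order_def)
  have M0: "card M \<noteq> 0" using cardM G0 by (metis mult_0)
  have nu: "multiplicity t (card M) = multiplicity t (order G)"
  proof -
    have "multiplicity t (order G) = multiplicity t (card M * p ^ multiplicity p (order G))" using cardM by simp
    also have "\<dots> = multiplicity t (card M) + multiplicity t (p ^ multiplicity p (order G))"
      using prime_elem_multiplicity_mult_distrib[of t "card M" "p ^ multiplicity p (order G)"] t(1) M0 p
      by (simp add: prime_gt_0_nat)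
    also have "multiplicity t (p ^ multiplicity p (order G)) = 0"
      using multiplicity_distinct_prime_power[OF t(1) p t(2)] .
    finally show ?thesis by simp
  qed
  obtain T where T: "subgroup T (G\<lparr>carrier := M\<rparr>)" "card T = t ^ multiplicity t (order (G\<lparr>carrier := M\<rparr>))"
    using MM.sylow_exists[OF finMM t(1)] by blast
  have cardT: "card T = t ^ multiplicity t (order G)" using T(2) oM nu by simp
  have TG: "subgroup T G" using incl_subgroup[OF Ms T(1)] .
  have Tss: "T \<subseteq> carrier G" using TG subgroup.subset by blast
  define N where "N = {g \<in> carrier G. cnj g T = T}"
  have Ns: "subgroup N G" unfolding N_def using normalizer_subgroup[OF TG] .
  have Nss: "N \<subseteq> carrier G" using Ns subgroup.subset by blast
  have tr: "\<exists>r\<in>M. N #> g = N #> r" if g: "g \<in> carrier G" for g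
  proof -
    have sub: "cnj g T \<subseteq> M"
    proof
      fix z assume "z \<in> cnj g T"
      then obtain k where k: "k \<in> T" "z = g \<otimes> k \<otimes> inv g" unfolding cnj_def by auto
      have "k \<in> M" using k(1) subgroup.subset[OF T(1)] by auto
      then show "z \<in> M" using normal.inv_op_closed2[OF Mn g] k by simp
    qed
    have cTM: "subgroup (cnj g T) (G\<lparr>carrier := M\<rparr>)" using subgroup_incl[OF cnj_subgroup[OF TG g] Ms sub] .
    have cardc: "card (cnj g T) = t ^ multiplicity t (order (G\<lparr>carrier := M\<rparr>))"
      using cnj_card[OF Tss g] T(2) by simp
    obtain m where m: "m \<in> M" "cnj g T = MM.cnj m T"
      using MM.sylow_conj[OF finMM t(1) T(1) T(2) cTM cardc] by auto
    have mG: "m \<in> carrier G" using m(1) Mss by blast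
    have "MM.cnj m T = cnj m T" unfolding MM.cnj_def cnj_def using m_inv_consistent[OF Ms m(1)] by simp
    then have e: "cnj g T = cnj m T" using m(2) by simp
    define n where "n = inv m \<otimes> g"
    have nG: "n \<in> carrier G" unfolding n_def using mG g by simp
    have "cnj n T = cnj (inv m) (cnj g T)" unfolding n_def using cnj_cnj[OF Tss inv_closed[OF mG] g] by simp
    also have "\<dots> = cnj (inv m) (cnj m T)" using e by simp
    also have "\<dots> = cnj (inv m \<otimes> m) T" using cnj_cnj[OF Tss inv_closed[OF mG] mG] .
    also have "\<dots> = T" using mG cnj_one[OF Tss] by simp
    finally have nN: "n \<in> N" unfolding N_def using nG by simp
    define r where "r = inv n \<otimes> m \<otimes> n"
    have rM: "r \<in> M" unfolding r_def using normal.inv_op_closed1[OF Mn nG m(1)] .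
    have "g = n \<otimes> r" unfolding r_def n_def using mG g by (simp add: m_assoc)
    then have "N #> g = (N #> n) #> r" using coset_mult_assoc[OF Nss nG] rM Mss by auto
    also have "N #> n = N" using subgroup.rcos_const[OF Ns is_group nN] .
    finally show ?thesis using rM by blast
  qed
  have idx: "card (rcosets N) dvd card M" using transitive_index_dvd[OF fin Ms Ns tr] .
  have pM: "\<not> p dvd card M"
  proof
    assume "p dvd card M"
    then obtain c where "card M = p * c" by blast
    then have "order G = p ^ Suc (multiplicity p (order G)) * c" using cardM by (simp add: ac_simps)
    then have "p ^ Suc (multiplicity p (order G)) dvd order G" by (metis dvd_triv_left)
    moreover have "\<not> is_unit p" using p by (meson not_prime_unit)
    ultimately have "Suc (multiplicity p (order G)) \<le> multiplicity p (order G)"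
      using power_dvd_iff_le_multiplicity[of "order G" p "Suc (multiplicity p (order G))"] G0 by blast
    then show False by simp
  qed
  have ndN: "\<not> p dvd card (rcosets N)" using idx pM dvd_trans by blast
  define R where "R = generate G {y}"
  have Rs: "subgroup R G" unfolding R_def using generate_is_subgroup yG by simp
  have cardR: "card R = p ^ a" unfolding R_def using generate_pow_card[OF yG] ordy by simp
  have yR: "y \<in> R" unfolding R_def by (rule generate.incl) simp
  obtain h where h: "h \<in> carrier G" "R \<subseteq> cnj h N" using conj_into[OF fin Rs cardR p Ns ndN] by blast
  define z where "z = inv h \<otimes> y \<otimes> h"
  have "z \<in> N" unfolding z_def using h yR mem_cnj_iff[OF Nss h(1) yG] by blast
  then have zN: "cnj z T = T" and zG: "z \<in> carrier G" unfolding N_def by auto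
  define T' where "T' = cnj h T"
  have T's: "subgroup T' G" unfolding T'_def using cnj_subgroup[OF TG h(1)] .
  have T'ss: "T' \<subseteq> carrier G" using T's subgroup.subset by blast
  have cardT': "card T' = card T" unfolding T'_def using cnj_card[OF Tss h(1)] .
  have "cnj y T' = cnj (y \<otimes> h) T" unfolding T'_def using cnj_cnj[OF Tss yG h(1)] .
  also have "y \<otimes> h = h \<otimes> z" unfolding z_def using yG h(1) by (simp add: m_assoc)
  also have "cnj (h \<otimes> z) T = cnj h (cnj z T)" using cnj_cnj[OF Tss h(1) zG] by simp
  finally have nT': "cnj y T' = T'" using zN unfolding T'_def by simp
  have nA: "\<And>b. b \<in> R \<Longrightarrow> cnj b T' = T'" unfolding R_def using gen_normalizes[OF T's yG nT'] by blast
  define K where "K = T' <#> R"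
  have Ks: "subgroup K G" unfolding K_def using prod_subgroup[OF T's Rs nA] .
  have yK: "y \<in> K" unfolding K_def using set_mult_incl[OF T's Rs] yR by blast
  have finT': "finite T'" using fin T'ss finite_subset by blast
  have finR: "finite R" using fin Rs subgroup.subset finite_subset by blast
  obtain s where s: "Factorial_Ring.prime s" "s dvd order G" "s \<noteq> t" "s \<noteq> p" using three[OF t(1)] by blast
  have "p ^ a dvd order G" using ord_dvd_group_order[OF yG] ordy by simp
  then have pa: "p ^ a \<le> p ^ multiplicity p (order G)" using pow_le_mult[OF p _ G0] by blast
  have "card K \<le> card T' * card R" unfolding K_def using card_set_mult_le[OF finT' finR] .
  also have "\<dots> \<le> t ^ multiplicity t (order G) * p ^ multiplicity p (order G)"
    using cardT' cardT cardR pa by simp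
  also have "\<dots> < order G" using three_bound[OF G0 t(1) p s(1) s(2) s(3) s(4) t(2)] .
  finally have "K \<noteq> carrier G" by (auto simp: order_def)
  then have "K \<subseteq> C" using abel Ks yK by blast
  then have "T' \<subseteq> C" unfolding K_def using set_mult_incl[OF T's Rs] by blast
  then have "card T' dvd card C" using card_sub_dvd[OF fin T's Cs] by blast
  then show ?thesis using cardT' cardT by simp
qed

end

context group begin

lemma caseII:
  assumes fin: "finite (carrier G)" and p: "Factorial_Ring.prime p" and yG: "y \<in> carrier G"
    and ordy: "ord y = p ^ a"
    and Cdef: "C = {x \<in> carrier G. x \<otimes> y = y \<otimes> x}"
    and abel: "\<And>K. subgroup K G \<Longrightarrow> K \<noteq> carrier G \<Longrightarrow> y \<in> K \<Longrightarrow> K \<subseteq> C"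
    and three: "\<And>t. Factorial_Ring.prime t \<Longrightarrow> \<exists>s. Factorial_Ring.prime s \<and> s dvd order G \<and> s \<noteq> t \<and> s \<noteq> p"
    and P: "subgroup P G" "card P = p ^ multiplicity p (order G)" "y \<in> P" "P \<subseteq> C"
    and commC: "\<And>u v. u \<in> C \<Longrightarrow> v \<in> C \<Longrightarrow> u \<otimes> v = v \<otimes> u"
    and nn: "\<And>g. g \<in> carrier G \<Longrightarrow> cnj g C = C \<Longrightarrow> g \<in> C"
    and Cne: "C \<noteq> carrier G"
  shows False
proof -
  have Cs: "subgroup C G" unfolding Cdef using centralizer_subgroup[OF yG] .
  have Css: "C \<subseteq> carrier G" using Cs subgroup.subset by blast
  have G0: "order G \<noteq> 0" using order_pos[OF fin] .
  have commP: "\<And>u v. u \<in> P \<Longrightarrow> v \<in> P \<Longrightarrow> u \<otimes> v = v \<otimes> u" using commC P(4) by blast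
  have fus: "x \<otimes> e \<otimes> inv x = e" if "x \<in> carrier G" "e \<in> P" "x \<otimes> e \<otimes> inv x \<in> P" for x e
    using fusion_caseII[OF yG Cdef abel commC nn] that P(4) by blast
  obtain M where M: "M \<lhd> G" "\<forall>g\<in>carrier G. \<exists>m\<in>M. \<exists>d\<in>P. g = m \<otimes> d" "M \<inter> P = {\<one>}"
    using normal_p_complement[OF fin p P(1) P(2) commP fus] by blast
  have Ms: "subgroup M G" using M(1) normal_imp_subgroup by blast
  have cardMP: "card M * p ^ multiplicity p (order G) = order G"
    using card_product[OF fin Ms P(1) M(2) M(3)] P(2) by simp
  have C0: "card C \<noteq> 0" using fin Css finite_subset subgroup.one_closed[OF Cs] by (metis card_0_eq empty_iff)
  have "order G dvd card C"
  proof (rule multiplicity_le_imp_dvd[OF G0])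
    fix t :: nat assume t: "Factorial_Ring.prime t"
    have "\<not> is_unit t" using t by (meson not_prime_unit)
    show "multiplicity t (order G) \<le> multiplicity t (card C)"
    proof (cases "t = p")
      case True
      have "card P dvd card C" using card_sub_dvd[OF fin P(1) Cs P(4)] .
      then show ?thesis using True P(2) power_dvd_iff_le_multiplicity[OF C0 \<open>\<not> is_unit t\<close>] by simp
    next
      case False
      have "t ^ multiplicity t (order G) dvd card C"
        using tpart[OF fin p yG ordy Cdef abel three M(1) cardMP t False] .
      then show ?thesis using power_dvd_iff_le_multiplicity[OF C0 \<open>\<not> is_unit t\<close>] by simp
    qed
  qed
  then have "order G \<le> card C" using C0 by (simp add: dvd_imp_le)
  moreover have "finite (carrier G)" using fin .
  ultimately have "C = carrier G" using Css card_seteq by (metis order_def)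
  then show False using Cne by simp
qed

lemma central_lemma:
  assumes fin: "finite (carrier G)" and p: "Factorial_Ring.prime p" and yG: "y \<in> carrier G"
    and ordy: "ord y = p ^ a"
    and abel0: "\<And>K. subgroup K G \<Longrightarrow> K \<noteq> carrier G \<Longrightarrow> y \<in> K \<Longrightarrow> (\<forall>u\<in>K. \<forall>v\<in>K. u \<otimes> v = v \<otimes> u)"
    and three: "\<And>t. Factorial_Ring.prime t \<Longrightarrow> \<exists>s. Factorial_Ring.prime s \<and> s dvd order G \<and> s \<noteq> t \<and> s \<noteq> p"
  shows "\<forall>x\<in>carrier G. x \<otimes> y = y \<otimes> x"
proof (rule ccontr)
  assume nc: "\<not> (\<forall>x\<in>carrier G. x \<otimes> y = y \<otimes> x)"
  define C where "C = {x \<in> carrier G. x \<otimes> y = y \<otimes> x}"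
  have Cs: "subgroup C G" unfolding C_def using centralizer_subgroup[OF yG] .
  have Cne: "C \<noteq> carrier G" using nc unfolding C_def by auto
  have yC: "y \<in> C" unfolding C_def using yG by simp
  have commC: "\<And>u v. u \<in> C \<Longrightarrow> v \<in> C \<Longrightarrow> u \<otimes> v = v \<otimes> u" using abel0[OF Cs Cne yC] by blast
  have abel: "K \<subseteq> C" if K: "subgroup K G" "K \<noteq> carrier G" "y \<in> K" for K
  proof
    fix k assume k: "k \<in> K"
    then have "k \<otimes> y = y \<otimes> k" using abel0[OF K] K(3) by blast
    then show "k \<in> C" unfolding C_def using k subgroup.subset[OF K(1)] by auto
  qed
  have G0: "order G \<noteq> 0" using order_pos[OF fin] .
  obtain S where S: "subgroup S G" "card S = p ^ multiplicity p (order G)" using sylow_exists[OF fin p] by blast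
  define R where "R = generate G {y}"
  have Rs: "subgroup R G" unfolding R_def using generate_is_subgroup yG by simp
  have cardR: "card R = p ^ a" unfolding R_def using generate_pow_card[OF yG] ordy by simp
  have yR: "y \<in> R" unfolding R_def by (rule generate.incl) simp
  obtain g where g: "g \<in> carrier G" "R \<subseteq> cnj g S" using psub_in_sylow[OF fin Rs cardR p S] by blast
  define P where "P = cnj g S"
  have Ps: "subgroup P G" unfolding P_def using cnj_subgroup[OF S(1) g(1)] .
  have cardP: "card P = p ^ multiplicity p (order G)" unfolding P_def
    using cnj_card[OF subgroup.subset[OF S(1)] g(1)] S(2) by simp
  have yP: "y \<in> P" unfolding P_def using g(2) yR by blast
  obtain s where s: "Factorial_Ring.prime s" "s dvd order G" "s \<noteq> p" using three[OF p] by blast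
  have "card P < order G" using one_bound[OF G0 p s(1) s(2) s(3)] cardP by simp
  then have Pne: "P \<noteq> carrier G" by (auto simp: order_def)
  have PC: "P \<subseteq> C" using abel[OF Ps Pne yP] .
  show False
  proof (cases "\<exists>g0\<in>carrier G. g0 \<notin> C \<and> cnj g0 C = C")
    case True
    then obtain g0 where "g0 \<in> carrier G" "g0 \<notin> C" "cnj g0 C = C" by blast
    then show False using caseI[OF fin p yG C_def abel three Ps cardP yP PC commC] by blast
  next
    case False
    then have nn: "\<And>g. g \<in> carrier G \<Longrightarrow> cnj g C = C \<Longrightarrow> g \<in> C" by blast
    show False using caseII[OF fin p yG ordy C_def abel three Ps cardP yP PC commC nn Cne] .
  qed
qed

end

context group begin

lemma sub_ord:
  assumes "subgroup H G"
  shows "group.ord (G\<lparr>carrier := H\<rparr>) x = ord x"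
proof -
  have grp: "group (G\<lparr>carrier := H\<rparr>)" using assms subgroup.subgroup_is_group is_group by blast
  show ?thesis unfolding group.ord_def[OF grp] ord_def by (simp add: sub_pow)
qed

lemma good_abel:
  assumes Ldef: "L = Lcm ((\<lambda>H. grp_exponent (G\<lparr>carrier := H\<rparr>)) ` proper_nonabelian_subgroups G)"
    and zG: "z \<in> carrier G" and nd: "\<not> ord z dvd L"
    and K: "subgroup K G" "K \<noteq> carrier G" "z \<in> K"
  shows "\<forall>u\<in>K. \<forall>v\<in>K. u \<otimes> v = v \<otimes> u"
proof (rule ccontr)
  assume nc: "\<not> (\<forall>u\<in>K. \<forall>v\<in>K. u \<otimes> v = v \<otimes> u)"
  have "\<not> comm_group (G\<lparr>carrier := K\<rparr>)" using nc sub_comm_groupD by blast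
  then have "K \<in> proper_nonabelian_subgroups G" unfolding proper_nonabelian_subgroups_def using K by simp
  then have e: "grp_exponent (G\<lparr>carrier := K\<rparr>) dvd L" unfolding Ldef by (intro dvd_Lcm) simp
  have "group.ord (G\<lparr>carrier := K\<rparr>) z dvd grp_exponent (G\<lparr>carrier := K\<rparr>)"
    unfolding grp_exponent_def using K(3) by (intro dvd_Lcm) simp
  then have "ord z dvd grp_exponent (G\<lparr>carrier := K\<rparr>)" using sub_ord[OF K(1)] by simp
  then show False using e nd dvd_trans by blast
qed

end

context group begin

lemma find_y:
  assumes fin: "finite (carrier G)" and crit: "exponent_critical G"
    and Ldef: "L = Lcm ((\<lambda>H. grp_exponent (G\<lparr>carrier := H\<rparr>)) ` proper_nonabelian_subgroups G)"
  shows "\<exists>p e y. Factorial_Ring.prime p \<and> y \<in> carrier G \<and> ord y = p ^ e \<and> 1 \<le> e \<and> \<not> p ^ e dvd L"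
proof -
  have LE: "L dvd grp_exponent G"
    unfolding Ldef
  proof (rule Lcm_least)
    fix b assume "b \<in> (\<lambda>H. grp_exponent (G\<lparr>carrier := H\<rparr>)) ` proper_nonabelian_subgroups G"
    then obtain H where H: "H \<in> proper_nonabelian_subgroups G" "b = grp_exponent (G\<lparr>carrier := H\<rparr>)" by blast
    have Hs: "subgroup H G" using H(1) unfolding proper_nonabelian_subgroups_def by simp
    show "b dvd grp_exponent G" unfolding H(2) grp_exponent_def
    proof (rule Lcm_least)
      fix c assume "c \<in> group.ord (G\<lparr>carrier := H\<rparr>) ` carrier (G\<lparr>carrier := H\<rparr>)"
      then obtain h where h: "h \<in> H" "c = group.ord (G\<lparr>carrier := H\<rparr>) h" by auto
      have "c = ord h" using h sub_ord[OF Hs] by simp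
      moreover have "h \<in> carrier G" using h(1) Hs subgroup.subset by blast
      ultimately show "c dvd Lcm (ord ` carrier G)" by (intro dvd_Lcm) simp
    qed
  qed
  have "\<exists>g\<in>carrier G. \<not> ord g dvd L"
  proof (rule ccontr)
    assume "\<not> (\<exists>g\<in>carrier G. \<not> ord g dvd L)"
    then have "grp_exponent G dvd L" unfolding grp_exponent_def by (intro Lcm_least) auto
    then have "grp_exponent G = L" using LE by (simp add: dvd_antisym)
    then show False using crit unfolding exponent_critical_def Ldef by simp
  qed
  then obtain g where gG: "g \<in> carrier G" and nd: "\<not> ord g dvd L" by blast
  have og0: "ord g \<noteq> 0" using ord_ge_1[OF fin gG] by simp
  have L0: "L \<noteq> 0" using nd by (metis dvd_0_right)
  obtain p where p: "Factorial_Ring.prime p" and np: "\<not> p ^ multiplicity p (ord g) dvd L"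
  proof (rule ccontr)
    assume "\<not> thesis"
    then have all: "\<And>p. Factorial_Ring.prime p \<Longrightarrow> p ^ multiplicity p (ord g) dvd L" using that by blast
    have "ord g dvd L"
    proof (rule multiplicity_le_imp_dvd[OF og0])
      fix q :: nat assume q: "Factorial_Ring.prime q"
      have "\<not> is_unit q" using q by (meson not_prime_unit)
      then show "multiplicity q (ord g) \<le> multiplicity q L"
        using all[OF q] power_dvd_iff_le_multiplicity[OF L0] by blast
    qed
    then show False using nd by simp
  qed
  define e where "e = multiplicity p (ord g)"
  define k where "k = ord g div p ^ e"
  have og: "ord g = p ^ e * k" unfolding k_def e_def using multiplicity_dvd[of p "ord g"] by simp
  have k0: "k \<noteq> 0" using og og0 by auto
  have kd: "k dvd ord g" using og by simp
  define y where "y = g [^] k"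
  have yG: "y \<in> carrier G" unfolding y_def using gG by simp
  have oy: "ord y = p ^ e" unfolding y_def using ord_pow[OF gG kd k0] og k0 by simp
  have e1: "1 \<le> e"
  proof (rule ccontr)
    assume "\<not> 1 \<le> e"
    then have "e = 0" by simp
    then show False using np unfolding e_def by simp
  qed
  have "\<not> p ^ e dvd L" using np unfolding e_def .
  then show ?thesis using p yG oy e1 by blast
qed

lemma three_from:
  assumes "\<exists>p q r :: nat. Factorial_Ring.prime p \<and> Factorial_Ring.prime q \<and> Factorial_Ring.prime r \<and> p \<noteq> q \<and> p \<noteq> r \<and> q \<noteq> r
           \<and> p dvd order G \<and> q dvd order G \<and> r dvd order G"
  shows "\<exists>s. Factorial_Ring.prime s \<and> s dvd order G \<and> s \<noteq> t \<and> s \<noteq> u"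
proof -
  obtain p q r :: nat where h: "Factorial_Ring.prime p" "Factorial_Ring.prime q" "Factorial_Ring.prime r"
    "p \<noteq> q" "p \<noteq> r" "q \<noteq> r" "p dvd order G" "q dvd order G" "r dvd order G" using assms by blast
  show ?thesis
  proof (cases "p \<noteq> t \<and> p \<noteq> u")
    case True then show ?thesis using h by blast
  next
    case False
    show ?thesis
    proof (cases "q \<noteq> t \<and> q \<noteq> u")
      case True then show ?thesis using h by blast
    next
      case False': False
      then have "r \<noteq> t \<and> r \<noteq> u" using False h by auto
      then show ?thesis using h by blast
    qed
  qed
qed

end

context group begin

lemma main_aux:
  assumes "finite (carrier G)"
    and "\<not> comm_group G"
    and "exponent_critical G"
    and "\<exists>p q r :: nat. Factorial_Ring.prime p \<and> Factorial_Ring.prime q \<and> Factorial_Ring.prime r \<and> p \<noteq> q \<and> p \<noteq> r \<and> q \<noteq> r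
           \<and> p dvd order G \<and> q dvd order G \<and> r dvd order G"
  shows "(\<exists>p P. sylow_subgroup G p P \<and> P \<noteq> {\<one>\<^bsub>G\<^esub>} \<and> central_subset G P
            \<and> cyclic_group (G\<lparr>carrier := P\<rparr>))
         \<and> (\<forall>p P. sylow_subgroup G p P \<longrightarrow> comm_group (G\<lparr>carrier := P\<rparr>))"
proof -
  note fin = assms(1)
  have G0: "order G \<noteq> 0" using order_pos[OF fin] .
  define L where "L = Lcm ((\<lambda>H. grp_exponent (G\<lparr>carrier := H\<rparr>)) ` proper_nonabelian_subgroups G)"
  obtain p e y where p: "Factorial_Ring.prime p" and yG: "y \<in> carrier G" and oy: "ord y = p ^ e"
    and e1: "1 \<le> e" and npe: "\<not> p ^ e dvd L"
    using find_y[OF fin assms(3) L_def] by blast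
  have three: "\<And>t. Factorial_Ring.prime t \<Longrightarrow> \<exists>s. Factorial_Ring.prime s \<and> s dvd order G \<and> s \<noteq> t \<and> s \<noteq> p"
    using three_from[OF assms(4)] by blast
  have goodab: "\<forall>u\<in>K. \<forall>v\<in>K. u \<otimes> v = v \<otimes> u"
    if "z \<in> carrier G" "\<not> ord z dvd L" "subgroup K G" "K \<noteq> carrier G" "z \<in> K" for z K
    using good_abel[OF L_def that] .
  have central_pp: "\<forall>x\<in>carrier G. x \<otimes> z = z \<otimes> x"
    if z: "z \<in> carrier G" "ord z = p ^ j" "\<not> ord z dvd L" for z j
    by (rule central_lemma[OF fin p z(1) z(2)]) (use goodab[OF z(1) z(3)] three in auto)
  have ynd: "\<not> ord y dvd L" using oy npe by simp
  have ycent: "\<forall>x\<in>carrier G. x \<otimes> y = y \<otimes> x" using central_pp[OF yG oy ynd] .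
  obtain S where S: "subgroup S G" "card S = p ^ multiplicity p (order G)" using sylow_exists[OF fin p] by blast
  define R where "R = generate G {y}"
  have Rs: "subgroup R G" unfolding R_def using generate_is_subgroup yG by simp
  have cardR: "card R = p ^ e" unfolding R_def using generate_pow_card[OF yG] oy by simp
  have yR: "y \<in> R" unfolding R_def by (rule generate.incl) simp
  obtain g where g: "g \<in> carrier G" "R \<subseteq> cnj g S" using psub_in_sylow[OF fin Rs cardR p S] by blast
  define P where "P = cnj g S"
  have Ps: "subgroup P G" unfolding P_def using cnj_subgroup[OF S(1) g(1)] .
  have Pss: "P \<subseteq> carrier G" using Ps subgroup.subset by blast
  have cardP: "card P = p ^ multiplicity p (order G)" unfolding P_def
    using cnj_card[OF subgroup.subset[OF S(1)] g(1)] S(2) by simp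
  have yP: "y \<in> P" unfolding P_def using g(2) yR by blast
  have finP: "finite P" using fin Pss finite_subset by blast
  obtain s where s: "Factorial_Ring.prime s" "s dvd order G" "s \<noteq> p" using three[OF p] by blast
  have "card P < order G" using one_bound[OF G0 p s(1) s(2) s(3)] cardP by simp
  then have Pne: "P \<noteq> carrier G" by (auto simp: order_def)
  have commP: "\<And>u v. u \<in> P \<Longrightarrow> v \<in> P \<Longrightarrow> u \<otimes> v = v \<otimes> u"
    using goodab[OF yG ynd Ps Pne yP] by blast
  have Pcent: "\<forall>x\<in>carrier G. x \<otimes> w = w \<otimes> x" if w: "w \<in> P" for w
  proof -
    have wG: "w \<in> carrier G" using w Pss by blast
    have "group.ord (G\<lparr>carrier := P\<rparr>) w dvd order (G\<lparr>carrier := P\<rparr>)"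
      using group.ord_dvd_group_order[OF subgroup.subgroup_is_group[OF Ps is_group]] w by simp
    then have "ord w dvd card P" using sub_ord[OF Ps] by (simp add: order_def)
    then obtain j where j: "ord w = p ^ j" using cardP divides_primepow_nat[OF p] by auto
    show ?thesis
    proof (cases "ord w dvd L")
      case False
      then show ?thesis using central_pp[OF wG j] by blast
    next
      case True
      have je: "j < e"
      proof (rule ccontr)
        assume "\<not> j < e"
        then have "p ^ e dvd p ^ j" by (simp add: le_imp_power_dvd)
        then show False using True j npe dvd_trans by metis
      qed
      define z where "z = w \<otimes> y"
      have zG: "z \<in> carrier G" unfolding z_def using wG yG by simp
      have wy: "w \<otimes> y = y \<otimes> w" using commP w yP by blast
      have zpow: "z [^] (n::nat) = w [^] n \<otimes> y [^] n" for n
        unfolding z_def using pow_mult_distrib[OF wy wG yG] .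
      have "z [^] (p ^ e) = \<one>"
      proof -
        have "w [^] (p ^ e) = \<one>" using j pow_eq_id[OF wG] je by (simp add: le_imp_power_dvd)
        moreover have "y [^] (p ^ e) = \<one>" using oy pow_eq_id[OF yG] by simp
        ultimately show ?thesis using zpow by simp
      qed
      then have "ord z dvd p ^ e" using pow_eq_id[OF zG] by simp
      then obtain i where i: "i \<le> e" "ord z = p ^ i" using divides_primepow_nat[OF p] by blast
      have "i = e"
      proof (rule ccontr)
        assume "i \<noteq> e"
        then have ie: "i \<le> e - 1" using i by simp
        have "z [^] (p ^ (e - 1)) = \<one>" using pow_eq_id[OF zG] i ie by (simp add: le_imp_power_dvd)
        moreover have "w [^] (p ^ (e - 1)) = \<one>" using j pow_eq_id[OF wG] je by (simp add: le_imp_power_dvd)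
        ultimately have "y [^] (p ^ (e - 1)) = \<one>" using zpow yG by simp
        then have "p ^ e dvd p ^ (e - 1)" using pow_eq_id[OF yG] oy by simp
        then have "e \<le> e - 1" using power_dvd_imp_le prime_gt_1_nat[OF p] by blast
        then show False using e1 by simp
      qed
      then have oz: "ord z = p ^ e" using i by simp
      have zc: "\<forall>x\<in>carrier G. x \<otimes> z = z \<otimes> x" using central_pp[OF zG oz] oz npe by simp
      have wz: "w = z \<otimes> inv y" unfolding z_def using wG yG by (simp add: m_assoc)
      show ?thesis
      proof
        fix x assume xG: "x \<in> carrier G"
        have xiy: "x \<otimes> inv y = inv y \<otimes> x"
        proof -
          have "x \<otimes> y = y \<otimes> x" using ycent xG by blast
          then have "inv y \<otimes> (x \<otimes> y) \<otimes> inv y = inv y \<otimes> (y \<otimes> x) \<otimes> inv y" by simp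
          then show ?thesis using xG yG by (simp add: m_assoc)
        qed
        have "x \<otimes> w = (x \<otimes> z) \<otimes> inv y" unfolding wz using xG zG yG by (simp add: m_assoc)
        also have "\<dots> = z \<otimes> (x \<otimes> inv y)" using zc xG zG yG by (simp add: m_assoc)
        also have "\<dots> = z \<otimes> inv y \<otimes> x" using xiy xG zG yG by (simp add: m_assoc)
        finally show "x \<otimes> w = w \<otimes> x" unfolding wz .
      qed
    qed
  qed
  have fus: "x \<otimes> d \<otimes> inv x = d" if "x \<in> carrier G" "d \<in> P" "x \<otimes> d \<otimes> inv x \<in> P" for x d
  proof -
    have "x \<otimes> d = d \<otimes> x" using Pcent that by blast
    then show ?thesis using that Pss by (simp add: m_assoc subsetD)
  qed
  obtain M where M: "M \<lhd> G" "\<forall>g\<in>carrier G. \<exists>m\<in>M. \<exists>d\<in>P. g = m \<otimes> d" "M \<inter> P = {\<one>}"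
    using normal_p_complement[OF fin p Ps cardP commP fus] by blast
  have Ms: "subgroup M G" using M(1) normal_imp_subgroup by blast
  have Mss: "M \<subseteq> carrier G" using Ms subgroup.subset by blast
  have RP: "R \<subseteq> P" unfolding R_def using generate_subgroup_incl[of "{y}" P] yP Ps by blast
  have nA: "cnj a M = M" if a: "a \<in> R" for a
  proof -
    have aG: "a \<in> carrier G" using a Rs subgroup.subset by blast
    have sub: "cnj a M \<subseteq> M" unfolding cnj_def using normal.inv_op_closed2[OF M(1) aG] by auto
    have "finite M" using fin Mss finite_subset by blast
    then show ?thesis using card_subset_eq[OF _ sub] cnj_card[OF Mss aG] by simp
  qed
  define K where "K = M <#> R"
  have Ks: "subgroup K G" unfolding K_def using prod_subgroup[OF Ms Rs nA] .
  have yK: "y \<in> K" unfolding K_def using set_mult_incl[OF Ms Rs] yR by blast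
  have KG: "K = carrier G"
  proof (rule ccontr)
    assume Kne: "K \<noteq> carrier G"
    have commK: "\<forall>u\<in>K. \<forall>v\<in>K. u \<otimes> v = v \<otimes> u" using goodab[OF yG ynd Ks Kne yK] .
    have MK: "M \<subseteq> K" unfolding K_def using set_mult_incl[OF Ms Rs] by blast
    have "comm_group G"
    proof (rule group_comm_groupI)
      fix a b assume a: "a \<in> carrier G" and b: "b \<in> carrier G"
      obtain m1 d1 where 1: "m1 \<in> M" "d1 \<in> P" "a = m1 \<otimes> d1" using M(2) a by blast
      obtain m2 d2 where 2: "m2 \<in> M" "d2 \<in> P" "b = m2 \<otimes> d2" using M(2) b by blast
      have G1: "m1 \<in> carrier G" "d1 \<in> carrier G" "m2 \<in> carrier G" "d2 \<in> carrier G" using 1 2 Mss Pss by auto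
      have c1: "m2 \<otimes> d1 = d1 \<otimes> m2" using Pcent 1(2) G1 by blast
      have c2: "m1 \<otimes> d2 = d2 \<otimes> m1" using Pcent 2(2) G1 by blast
      have c3: "m1 \<otimes> m2 = m2 \<otimes> m1" using commK MK 1(1) 2(1) by blast
      have c4: "d1 \<otimes> d2 = d2 \<otimes> d1" using commP 1(2) 2(2) by blast
      have "a \<otimes> b = m1 \<otimes> (d1 \<otimes> m2) \<otimes> d2" unfolding 1 2 using G1 by (simp add: m_assoc)
      also have "\<dots> = m1 \<otimes> (m2 \<otimes> d1) \<otimes> d2" using c1 by simp
      also have "\<dots> = (m1 \<otimes> m2) \<otimes> (d1 \<otimes> d2)" using G1 by (simp add: m_assoc)
      also have "\<dots> = (m2 \<otimes> m1) \<otimes> (d2 \<otimes> d1)" using c3 c4 by simp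
      also have "\<dots> = m2 \<otimes> (m1 \<otimes> d2) \<otimes> d1" using G1 by (simp add: m_assoc)
      also have "\<dots> = m2 \<otimes> (d2 \<otimes> m1) \<otimes> d1" using c2 by simp
      also have "\<dots> = b \<otimes> a" unfolding 1 2 using G1 by (simp add: m_assoc)
      finally show "a \<otimes> b = b \<otimes> a" .
    qed
    then show False using assms(2) by simp
  qed
  have PR: "P \<subseteq> R"
  proof
    fix d assume d: "d \<in> P"
    then have "d \<in> M <#> R" using KG K_def Pss by auto
    then obtain m r where mr: "m \<in> M" "r \<in> R" "d = m \<otimes> r" unfolding set_mult_def by blast
    have G1: "m \<in> carrier G" "r \<in> carrier G" using mr Mss RP Pss by auto
    have "m = d \<otimes> inv r" using mr G1 by (simp add: m_assoc)
    moreover have "d \<otimes> inv r \<in> P" using subgroup.m_closed[OF Ps d subgroup.m_inv_closed[OF Ps]] mr RP by blast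
    ultimately have "m \<in> M \<inter> P" using mr by simp
    then have "m = \<one>" using M(3) by blast
    then show "d \<in> R" using mr G1 by simp
  qed
  have PeqR: "P = R" using RP PR by blast
  have part1: "\<exists>p P. sylow_subgroup G p P \<and> P \<noteq> {\<one>} \<and> central_subset G P \<and> cyclic_group (G\<lparr>carrier := P\<rparr>)"
  proof (intro exI conjI)
    show "sylow_subgroup G p P" unfolding sylow_subgroup_def using p Ps cardP by simp
    have "y \<noteq> \<one>"
    proof
      assume "y = \<one>"
      then have "p ^ e = 1" using oy by simp
      moreover have "1 < p ^ e" using one_less_power[OF prime_gt_1_nat[OF p]] e1 by simp
      ultimately show False by (simp only: less_irrefl)
    qed
    then show "P \<noteq> {\<one>}" using yP by blast
    show "central_subset G P" unfolding central_subset_def using Pcent by (metis)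
    have "generate (G\<lparr>carrier := P\<rparr>) {y} = generate G {y}"
      using generate_consistent[of "{y}" P] yP Ps by blast
    then have "generate (G\<lparr>carrier := P\<rparr>) (P \<inter> {y}) = P" using yP PeqR R_def by simp
    then show "cyclic_group (G\<lparr>carrier := P\<rparr>)"
      unfolding cyclic_group_def subgroup_generated_def using yP by (intro bexI[of _ y]) simp_all
  qed
  have part2: "comm_group (G\<lparr>carrier := Q\<rparr>)" if Q: "sylow_subgroup G t Q" for t Q
  proof -
    have t: "Factorial_Ring.prime t" and Qs: "subgroup Q G" and cardQ: "card Q = t ^ multiplicity t (order G)"
      using Q unfolding sylow_subgroup_def by auto
    have Qss: "Q \<subseteq> carrier G" using Qs subgroup.subset by blast
    have "\<forall>u\<in>Q. \<forall>v\<in>Q. u \<otimes> v = v \<otimes> u"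
    proof (cases "t = p")
      case True
      obtain h where h: "h \<in> carrier G" "Q \<subseteq> cnj h P"
        using psub_in_sylow[OF fin Qs cardQ t Ps] cardP True by auto
      have "cnj h P = P"
      proof -
        have "cnj h P = (\<lambda>k. k) ` P" unfolding cnj_def
        proof (rule image_cong[OF refl])
          fix k assume k: "k \<in> P"
          have "h \<otimes> k = k \<otimes> h" using Pcent k h(1) by blast
          then show "h \<otimes> k \<otimes> inv h = k" using k Pss h(1) by (simp add: m_assoc subsetD)
        qed
        then show ?thesis by simp
      qed
      then have "Q \<subseteq> P" using h by simp
      then show ?thesis using commP by blast
    next
      case False
      have nQ: "cnj a Q = Q" if a: "a \<in> R" for a
      proof -
        have "a \<in> P" using a RP by blast
        then have ac: "\<forall>x\<in>carrier G. x \<otimes> a = a \<otimes> x" using Pcent by blast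
        have aG: "a \<in> carrier G" using \<open>a \<in> P\<close> Pss by blast
        have "cnj a Q = (\<lambda>k. k) ` Q" unfolding cnj_def
        proof (rule image_cong[OF refl])
          fix k assume k: "k \<in> Q"
          have "a \<otimes> k = k \<otimes> a" using ac k Qss by (metis subsetD)
          then show "a \<otimes> k \<otimes> inv a = k" using k Qss aG by (simp add: m_assoc subsetD)
        qed
        then show ?thesis by simp
      qed
      define K' where "K' = Q <#> R"
      have K's: "subgroup K' G" unfolding K'_def using prod_subgroup[OF Qs Rs nQ] .
      have yK': "y \<in> K'" unfolding K'_def using set_mult_incl[OF Qs Rs] yR by blast
      have QK': "Q \<subseteq> K'" unfolding K'_def using set_mult_incl[OF Qs Rs] by blast
      have finQ: "finite Q" using fin Qss finite_subset by blast
      have finR: "finite R" using fin Rs subgroup.subset finite_subset by blast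
      obtain s' where s': "Factorial_Ring.prime s'" "s' dvd order G" "s' \<noteq> t" "s' \<noteq> p" using three[OF t] by blast
      have "p ^ e dvd order G" using ord_dvd_group_order[OF yG] oy by simp
      then have pe: "p ^ e \<le> p ^ multiplicity p (order G)" using pow_le_mult[OF p _ G0] by blast
      have "card K' \<le> card Q * card R" unfolding K'_def using card_set_mult_le[OF finQ finR] .
      also have "\<dots> \<le> t ^ multiplicity t (order G) * p ^ multiplicity p (order G)"
        using cardQ cardR pe by simp
      also have "\<dots> < order G" using three_bound[OF G0 t p s'(1) s'(2) s'(3) s'(4) False] .
      finally have "K' \<noteq> carrier G" by (auto simp: order_def)
      then have "\<forall>u\<in>K'. \<forall>v\<in>K'. u \<otimes> v = v \<otimes> u" using goodab[OF yG ynd K's] yK' by blast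
      then show ?thesis using QK' by blast
    qed
    then show ?thesis using sub_comm_group[OF Qs] by blast
  qed
  show ?thesis using part1 part2 by blast
qed

end

theorem mainTheorem6:
  fixes G :: "('a, 'b) monoid_scheme"
  assumes "group G"
    and "finite (carrier G)"
    and "\<not> comm_group G"
    and "exponent_critical G"
    and "\<exists>p q r :: nat. Factorial_Ring.prime p \<and> Factorial_Ring.prime q \<and> Factorial_Ring.prime r \<and> p \<noteq> q \<and> p \<noteq> r \<and> q \<noteq> r
           \<and> p dvd order G \<and> q dvd order G \<and> r dvd order G"
  shows "(\<exists>p P. sylow_subgroup G p P \<and> P \<noteq> {\<one>\<^bsub>G\<^esub>} \<and> central_subset G P
            \<and> cyclic_group (G\<lparr>carrier := P\<rparr>))
         \<and> (\<forall>p P. sylow_subgroup G p P \<longrightarrow> comm_group (G\<lparr>carrier := P\<rparr>))"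
  using group.main_aux[OF assms(1) assms(2) assms(3) assms(4) assms(5)] .

end
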